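(* Let $\mathbb{M}$ be a weight sequence with sequence of quotients $\mathbf{m}$. Then (i) $\gamma(\mathbb{M})=\beta(\mathbf{m})=1/\alpha(\nu_{\mathbf{m}})\le1/\alpha(\omega_{\mathbb{M}})=\gamma(\omega_{\mathbb{M}})$; (ii) $\alpha(\mathbf{m})=1/\beta(\nu_{\mathbf{m}})=1/\beta(\omega_{\mathbb{M}})$; (iii) if $\mathbb{M}$ has in addition moderate growth, then $\gamma(\mathbb{M})=\gamma(\omega_{\mathbb{M}})$.
   Context: A weight sequence is $\mathbb{M}=(M_p)_{p\in\mathbb{N}_0}$ of positive reals with $M_0=1$, $M_p^2\le M_{p-1}M_{p+1}$ ($p\ge1$) and $M_p^{1/p}\to\infty$; $m_p=M_{p+1}/M_p$. Moderate growth: there is $A>0$ with $M_{p+q}\le A^{p+q}M_pM_q$ for all $p,q\in\mathbb{N}_0$. $\omega_{\mathbb{M}}(t):=\sup_{p\in\mathbb{N}_0}\log(t^p/M_p)$ for $t>0$, $\omega_{\mathbb{M}}(0)=0$; $\nu_{\mathbf{m}}(t):=\#\{j\in\mathbb{N}_0:m_j\le t\}$ for $t>0$. For a positive measurable $f$ on $[A,\infty)$: $\alpha(f):=\inf\{\alpha:\exists C_\alpha>0\ \forall\Lambda>1,\ \limsup_{x\to\infty}\sup_{\lambda\in[1,\Lambda]}\frac{f(\lambda x)}{\lambda^{\alpha}f(x)}\le C_\alpha\}$, $\beta(f):=\sup\{\beta:\exists D_\beta>0\ \forall\Lambda>1,\ \liminf_{x\to\infty}\inf_{\lambda\in[1,\Lambda]}\frac{f(\lambda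 x)}{\lambda^{\beta}f(x)}\ge D_\beta\}$; for $\omega_{\mathbb{M}}$, $\nu_{\mathbf{m}}$ computed on any $[A,\infty)$, $A>0$, where the function is positive; for $\mathbf{m}$, these are the indices of the step function $x\mapsto m_{\lfloor x\rfloor-1}$, $x\ge1$. For a nondecreasing $\sigma$ tending to $\infty$ and $\gamma>0$, $(P_{\sigma,\gamma})$ holds if there is $K>1$ with $\limsup_{t\to\infty}\sigma(K^{\gamma}t)/\sigma(t)<K$; $\gamma(\sigma):=\sup\{\gamma>0:(P_{\sigma,\gamma})\}$ ($:=0$ if none). For the sequence, $\mathbb{M}$ satisfies $(P_\gamma)$ ($\gamma\in\mathbb{R}$) if there is a real sequence $\boldsymbol{\ell}$ and $c\ge1$ with $c^{-1}m_p\le\ell_p\le cm_p$ and $((p+1)^{-\gamma}\ell_p)_p$ nondecreasing; $\gamma(\mathbb{M}):=\sup\{\gamma:(P_\gamma)\text{ holds}\}$. Conventions $1/0=\infty$, $1/\infty=0$. *)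

theory Defs
  imports "HOL-Analysis.Analysis" "HOL-Library.Liminf_Limsup"
begin

definition weight_seq :: "(nat \<Rightarrow> real) \<Rightarrow> bool" where
  "weight_seq M \<longleftrightarrow> M 0 = 1 \<and> (\<forall>p. M p > 0) \<and>
     (\<forall>p\<ge>1. (M p)^2 \<le> M (p - 1) * M (p + 1)) \<and>
     filterlim (\<lambda>p. root p (M p)) at_top sequentially"

definition quot :: "(nat \<Rightarrow> real) \<Rightarrow> nat \<Rightarrow> real" where
  "quot M p = M (Suc p) / M p"

definition moderate_growth :: "(nat \<Rightarrow> real) \<Rightarrow> bool" where
  "moderate_growth M \<longleftrightarrow> (\<exists>A>0. \<forall>p q. M (p + q) \<le> A ^ (p + q) * M p * M q)"

definition omega_w :: "(nat \<Rightarrow> real) \<Rightarrow> real \<Rightarrow> real" where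
  "omega_w M t = (if t > 0 then (SUP p. ln (t ^ p / M p)) else 0)"

definition nu_c :: "(nat \<Rightarrow> real) \<Rightarrow> real \<Rightarrow> real" where
  "nu_c m t = real (card {j. m j \<le> t})"

text \<open>Step function x \<mapsto> m_{floor x - 1} (relevant for x \<ge> 1).\<close>
definition step_fun :: "(nat \<Rightarrow> real) \<Rightarrow> real \<Rightarrow> real" where
  "step_fun m x = m (nat \<lfloor>x\<rfloor> - 1)"

text \<open>Matuszewska-type indices alpha(f), beta(f) (values in extended reals;
  inf of empty set = \<infinity>, sup of empty set = -\<infinity>). Only the behaviour as x \<rightarrow> \<infinity> matters.\<close>
definition alpha_idx :: "(real \<Rightarrow> real) \<Rightarrow> ereal" where
  "alpha_idx f = Inf {ereal a | a. \<exists>C>0. \<forall>\<Lambda>>1.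
      Limsup at_top (\<lambda>x. SUP l\<in>{1..\<Lambda>}. ereal (f (l * x) / (l powr a * f x))) \<le> ereal C}"

definition beta_idx :: "(real \<Rightarrow> real) \<Rightarrow> ereal" where
  "beta_idx f = Sup {ereal b | b. \<exists>D>0. \<forall>\<Lambda>>1.
      Liminf at_top (\<lambda>x. INF l\<in>{1..\<Lambda>}. ereal (f (l * x) / (l powr b * f x))) \<ge> ereal D}"

definition P_fun :: "(real \<Rightarrow> real) \<Rightarrow> real \<Rightarrow> bool" where
  "P_fun \<sigma> g \<longleftrightarrow> (\<exists>K>1. Limsup at_top (\<lambda>t. ereal (\<sigma> (K powr g * t) / \<sigma> t)) < ereal K)"

definition gamma_fun :: "(real \<Rightarrow> real) \<Rightarrow> ereal" where
  "gamma_fun \<sigma> = (if {g. g > 0 \<and> P_fun \<sigma> g} = {} then 0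
                    else Sup {ereal g | g. g > 0 \<and> P_fun \<sigma> g})"

definition P_seq :: "(nat \<Rightarrow> real) \<Rightarrow> real \<Rightarrow> bool" where
  "P_seq M g \<longleftrightarrow> (\<exists>(l::nat \<Rightarrow> real) c. c \<ge> 1 \<and>
      (\<forall>p. quot M p / c \<le> l p \<and> l p \<le> c * quot M p) \<and>
      mono (\<lambda>p. l p / (real p + 1) powr g))"

definition gamma_seq :: "(nat \<Rightarrow> real) \<Rightarrow> ereal" where
  "gamma_seq M = Sup {ereal g | g. P_seq M g}"

end

theory Submission
  imports Defs
begin
definition Aset :: "(real \<Rightarrow> real) \<Rightarrow> real set" where
  "Aset f = {a. \<exists>C>0. \<exists>x0. \<forall>x\<ge>x0. \<forall>l\<ge>1. f (l * x) \<le> C * l powr a * f x}"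

definition Bset :: "(real \<Rightarrow> real) \<Rightarrow> real set" where
  "Bset f = {b. \<exists>D>0. \<exists>x0. \<forall>x\<ge>x0. \<forall>l\<ge>1. f (l * x) \<ge> D * l powr b * f x}"

lemma pow_le_powr_aux:
  fixes L K e l :: real and k :: nat
  assumes L: "L > 0" and K: "K \<ge> 1" and hL: "ln K \<le> e * L" and e: "e > 0"
    and kl: "real k * L \<le> ln l" and l: "l \<ge> 1"
  shows "K ^ k \<le> l powr e"
proof -
  have "K ^ k = exp (real k * ln K)" using K by (simp add: exp_of_nat_mult)
  also have "\<dots> \<le> exp (e * ln l)"
  proof -
    have "real k * ln K \<le> real k * (e * L)" using hL by (simp add: mult_left_mono)
    also have "\<dots> = e * (real k * L)" by simp
    also have "\<dots> \<le> e * ln l" using kl e by (simp add: mult_left_mono)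
    finally show ?thesis by simp
  qed
  also have "\<dots> = l powr e" using l by (simp add: powr_def)
  finally show ?thesis .
qed

lemma floor_log_bounds:
  fixes L l :: real
  assumes L: "L > 0" and l: "l \<ge> 1"
  defines "k \<equiv> nat \<lfloor>ln l / L\<rfloor>"
  shows "real k * L \<le> ln l" "ln l < (real k + 1) * L"
proof -
  have nn: "ln l / L \<ge> 0" using l L by simp
  have "real k = of_int \<lfloor>ln l / L\<rfloor>" using nn unfolding k_def by simp
  then have k1: "real k \<le> ln l / L" and k2: "ln l / L < real k + 1" by linarith+
  show "real k * L \<le> ln l" using k1 L by (simp add: pos_le_divide_eq)
  show "ln l < (real k + 1) * L" using k2 L by (simp add: pos_divide_less_eq)
qed

lemma alpha_char:
  fixes f :: "real \<Rightarrow> real"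
  assumes pos: "\<And>x. x \<ge> x1 \<Longrightarrow> f x > 0"
  shows "alpha_idx f = Inf (ereal ` Aset f)"
proof -
  define S where "S = {a. \<exists>C>0. \<forall>\<Lambda>>1.
      Limsup at_top (\<lambda>x. SUP l\<in>{1..\<Lambda>}. ereal (f (l * x) / (l powr a * f x))) \<le> ereal C}"
  have aS: "alpha_idx f = Inf (ereal ` S)"
    unfolding alpha_idx_def S_def by (simp add: setcompr_eq_image)
  have sub: "Aset f \<subseteq> S"
  proof
    fix a assume "a \<in> Aset f"
    then obtain C x0 where C: "C > 0" and h: "\<And>x l. x \<ge> x0 \<Longrightarrow> l \<ge> 1 \<Longrightarrow> f (l * x) \<le> C * l powr a * f x"
      unfolding Aset_def by blast
    show "a \<in> S" unfolding S_def
    proof (intro CollectI exI[of _ C] conjI allI impI)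
      show "C > 0" by fact
      fix \<Lambda> :: real assume "\<Lambda> > 1"
      show "Limsup at_top (\<lambda>x. SUP l\<in>{1..\<Lambda>}. ereal (f (l * x) / (l powr a * f x))) \<le> ereal C"
      proof (rule Limsup_bounded)
        show "\<forall>\<^sub>F x in at_top. (SUP l\<in>{1..\<Lambda>}. ereal (f (l * x) / (l powr a * f x))) \<le> ereal C"
          unfolding eventually_at_top_linorder
        proof (intro exI[of _ "max x0 x1"] allI impI)
          fix x assume x: "max x0 x1 \<le> x"
          show "(SUP l\<in>{1..\<Lambda>}. ereal (f (l * x) / (l powr a * f x))) \<le> ereal C"
          proof (rule SUP_least)
            fix l assume "l \<in> {1..\<Lambda>}"
            then have l: "l \<ge> 1" by simp
            have fx: "f x > 0" using pos x by simp
            have lp: "l powr a > 0" using l by simp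
            have "f (l * x) \<le> C * l powr a * f x" using h x l by simp
            then have "f (l * x) / (l powr a * f x) \<le> C"
              using fx lp by (simp add: divide_le_eq mult_ac)
            then show "ereal (f (l * x) / (l powr a * f x)) \<le> ereal C" by simp
          qed
        qed
      qed
    qed
  qed
  have eps: "a + e \<in> Aset f" if aS: "a \<in> S" and e: "e > 0" for a e
  proof -
    obtain C where C: "C > 0" and hC: "\<And>\<Lambda>. \<Lambda> > 1 \<Longrightarrow>
        Limsup at_top (\<lambda>x. SUP l\<in>{1..\<Lambda>}. ereal (f (l * x) / (l powr a * f x))) \<le> ereal C"
      using aS unfolding S_def by blast
    define C' where "C' = max (2 * C) 1"
    have C'1: "C' \<ge> 1" unfolding C'_def by simp
    define L where "L = max 1 (ln C' / e)"
    define \<Lambda> where "\<Lambda> = exp L"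
    have L: "L > 0" unfolding L_def by simp
    have \<Lambda>1: "\<Lambda> > 1" unfolding \<Lambda>_def using L by simp
    have hL: "ln C' \<le> e * L"
    proof -
      have "ln C' = e * (ln C' / e)" using e by simp
      also have "\<dots> \<le> e * L" unfolding L_def using e by (intro mult_left_mono) auto
      finally show ?thesis .
    qed
    have "Limsup at_top (\<lambda>x. SUP l\<in>{1..\<Lambda>}. ereal (f (l * x) / (l powr a * f x))) < ereal (2 * C)"
    proof -
      have "ereal C < ereal (2 * C)" using C by simp
      then show ?thesis using hC[OF \<Lambda>1] by (rule le_less_trans[rotated])
    qed
    from Limsup_lessD[OF this] obtain x2 where x2: "\<And>x. x \<ge> x2 \<Longrightarrow>
        (SUP l\<in>{1..\<Lambda>}. ereal (f (l * x) / (l powr a * f x))) < ereal (2 * C)"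
      unfolding eventually_at_top_linorder by blast
    define x0 where "x0 = max (max x1 x2) 1"
    have base: "f (l * x) \<le> C' * l powr a * f x" if x: "x \<ge> x0" and l: "1 \<le> l" "l \<le> \<Lambda>" for x l
    proof -
      have "ereal (f (l * x) / (l powr a * f x)) \<le> (SUP l\<in>{1..\<Lambda>}. ereal (f (l * x) / (l powr a * f x)))"
        using l by (intro SUP_upper) auto
      also have "\<dots> < ereal (2 * C)" using x2 x unfolding x0_def by simp
      finally have r: "f (l * x) / (l powr a * f x) < 2 * C" by simp
      have fx: "f x > 0" using pos x unfolding x0_def by simp
      have lp: "l powr a > 0" using l by simp
      have "f (l * x) < 2 * C * (l powr a * f x)" using r fx lp by (simp add: divide_less_eq)
      also have "\<dots> \<le> C' * (l powr a * f x)" unfolding C'_def using fx lp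
        by (intro mult_right_mono) auto
      finally show ?thesis by (simp add: mult_ac)
    qed
    have iter: "\<forall>x\<ge>x0. \<forall>l. 1 \<le> l \<longrightarrow> l \<le> \<Lambda> ^ (k + 1) \<longrightarrow> f (l * x) \<le> C' ^ (k + 1) * l powr a * f x" for k
    proof (induction k)
      case 0
      then show ?case using base by simp
    next
      case (Suc k)
      show ?case
      proof (intro allI impI)
        fix x l assume x: "x \<ge> x0" and l1: "1 \<le> l" and l2: "l \<le> \<Lambda> ^ (Suc k + 1)"
        have fx: "f x > 0" using pos x unfolding x0_def by simp
        show "f (l * x) \<le> C' ^ (Suc k + 1) * l powr a * f x"
        proof (cases "l \<le> \<Lambda> ^ (k + 1)")
          case True
          then have "f (l * x) \<le> C' ^ (k + 1) * l powr a * f x" using Suc x l1 by blast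
          also have "\<dots> \<le> C' ^ (Suc k + 1) * l powr a * f x"
            using fx C'1 by (intro mult_right_mono power_increasing) auto
          finally show ?thesis .
        next
          case False
          define \<mu> where "\<mu> = l / \<Lambda>"
          have \<Lambda>k: "\<Lambda> ^ (k + 1) \<ge> \<Lambda>" using power_increasing[of 1 "k+1" \<Lambda>] \<Lambda>1 by simp
          have "\<Lambda> \<le> l" using False \<Lambda>k by linarith
          then have \<mu>1: "\<mu> \<ge> 1" unfolding \<mu>_def using \<Lambda>1 by (simp add: le_divide_eq)
          have \<mu>2: "\<mu> \<le> \<Lambda> ^ (k + 1)" unfolding \<mu>_def using l2 \<Lambda>1 by (simp add: divide_le_eq mult.commute)
          have x0p: "x0 \<ge> 1" unfolding x0_def by simp
          have \<mu>x: "\<mu> * x \<ge> x0" 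
          proof -
            have "1 * x \<le> \<mu> * x" using \<mu>1 x x0p by (intro mult_right_mono) auto
            then show ?thesis using x by simp
          qed
          have lx: "l * x = \<Lambda> * (\<mu> * x)" unfolding \<mu>_def using \<Lambda>1 by simp
          have "f (l * x) \<le> C' * \<Lambda> powr a * f (\<mu> * x)"
            unfolding lx using base[OF \<mu>x] \<Lambda>1 by simp
          also have "\<dots> \<le> C' * \<Lambda> powr a * (C' ^ (k + 1) * \<mu> powr a * f x)"
            using Suc \<mu>1 \<mu>2 x C'1 by (intro mult_left_mono) auto
          also have "\<dots> = C' ^ (Suc k + 1) * (\<Lambda> * \<mu>) powr a * f x"
            using \<Lambda>1 \<mu>1 by (simp add: powr_mult)
          also have "\<Lambda> * \<mu> = l" unfolding \<mu>_def using \<Lambda>1 by simp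
          finally show ?thesis .
        qed
      qed
    qed
    have C'0: "C' > 0" using C'1 by simp
    have "\<forall>x\<ge>x0. \<forall>l\<ge>1. f (l * x) \<le> C' * l powr (a + e) * f x"
    proof (intro allI impI)
      fix x l :: real assume x: "x \<ge> x0" and l: "1 \<le> l"
      define k where "k = nat \<lfloor>ln l / L\<rfloor>"
      have k1: "real k * L \<le> ln l" and k2: "ln l < (real k + 1) * L"
        using floor_log_bounds[OF L l] unfolding k_def by auto
      have "l = exp (ln l)" using l by simp
      also have "\<dots> \<le> exp ((real k + 1) * L)" using k2 by simp
      also have "\<dots> = \<Lambda> ^ (k + 1)" unfolding \<Lambda>_def
        by (metis exp_of_nat_mult of_nat_Suc Suc_eq_plus1 add.commute)
      finally have lk: "l \<le> \<Lambda> ^ (k + 1)" .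
      have fx: "f x > 0" using pos x unfolding x0_def by simp
      have "f (l * x) \<le> C' ^ (k + 1) * l powr a * f x" using iter x l lk by blast
      also have "\<dots> = C' * C' ^ k * l powr a * f x" by simp
      also have "\<dots> \<le> C' * l powr e * l powr a * f x"
        using pow_le_powr_aux[OF L C'1 hL e k1 l] fx C'1 l
        by (intro mult_right_mono mult_left_mono) auto
      also have "\<dots> = C' * l powr (a + e) * f x" using l by (simp add: powr_add)
      finally show "f (l * x) \<le> C' * l powr (a + e) * f x" .
    qed
    then show "a + e \<in> Aset f" unfolding Aset_def using C'0 by blast
  qed
  show ?thesis unfolding aS
  proof (rule antisym)
    show "Inf (ereal ` S) \<le> Inf (ereal ` Aset f)" using sub by (intro Inf_superset_mono image_mono)
    show "Inf (ereal ` Aset f) \<le> Inf (ereal ` S)"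
    proof (rule Inf_greatest)
      fix y assume "y \<in> ereal ` S"
      then obtain a where a: "a \<in> S" and y: "y = ereal a" by auto
      show "Inf (ereal ` Aset f) \<le> y" unfolding y
      proof (rule ereal_le_epsilon2)
        fix e :: real assume "0 < e"
        then have "Inf (ereal ` Aset f) \<le> ereal (a + e)" using eps[OF a] by (intro Inf_lower) auto
        then show "Inf (ereal ` Aset f) \<le> ereal a + ereal e" by simp
      qed
    qed
  qed
qed


lemma pow_ge_powr_aux:
  fixes L K e l :: real and k :: nat
  assumes L: "L > 0" and K: "K > 0" "K \<le> 1" and hL: "- ln K \<le> e * L" and e: "e > 0"
    and kl: "real k * L \<le> ln l" and l: "l \<ge> 1"
  shows "l powr (- e) \<le> K ^ k"
proof -
  have "l powr (- e) = exp (- (e * ln l))" using l by (simp add: powr_def)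
  also have "\<dots> \<le> exp (real k * ln K)"
  proof -
    have "- (e * ln l) \<le> - (e * (real k * L))" using kl e by (simp add: mult_left_mono)
    also have "\<dots> = real k * (- (e * L))" by simp
    also have "\<dots> \<le> real k * ln K" using hL by (intro mult_left_mono) auto
    finally show ?thesis by simp
  qed
  also have "\<dots> = K ^ k" using K by (simp add: exp_of_nat_mult)
  finally show ?thesis .
qed

lemma beta_char:
  fixes f :: "real \<Rightarrow> real"
  assumes pos: "\<And>x. x \<ge> x1 \<Longrightarrow> f x > 0"
  shows "beta_idx f = Sup (ereal ` Bset f)"
proof -
  define S where "S = {b. \<exists>D>0. \<forall>\<Lambda>>1.
      Liminf at_top (\<lambda>x. INF l\<in>{1..\<Lambda>}. ereal (f (l * x) / (l powr b * f x))) \<ge> ereal D}"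
  have bS: "beta_idx f = Sup (ereal ` S)"
    unfolding beta_idx_def S_def by (simp add: setcompr_eq_image)
  have sub: "Bset f \<subseteq> S"
  proof
    fix b assume "b \<in> Bset f"
    then obtain D x0 where D: "D > 0" and h: "\<And>x l. x \<ge> x0 \<Longrightarrow> l \<ge> 1 \<Longrightarrow> f (l * x) \<ge> D * l powr b * f x"
      unfolding Bset_def by blast
    show "b \<in> S" unfolding S_def
    proof (intro CollectI exI[of _ D] conjI allI impI)
      show "D > 0" by fact
      fix \<Lambda> :: real assume "\<Lambda> > 1"
      show "Liminf at_top (\<lambda>x. INF l\<in>{1..\<Lambda>}. ereal (f (l * x) / (l powr b * f x))) \<ge> ereal D"
      proof (rule Liminf_bounded)
        show "\<forall>\<^sub>F x in at_top. ereal D \<le> (INF l\<in>{1..\<Lambda>}. ereal (f (l * x) / (l powr b * f x)))"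
          unfolding eventually_at_top_linorder
        proof (intro exI[of _ "max x0 x1"] allI impI)
          fix x assume x: "max x0 x1 \<le> x"
          show "ereal D \<le> (INF l\<in>{1..\<Lambda>}. ereal (f (l * x) / (l powr b * f x)))"
          proof (rule INF_greatest)
            fix l assume "l \<in> {1..\<Lambda>}"
            then have l: "l \<ge> 1" by simp
            have fx: "f x > 0" using pos x by simp
            have lp: "l powr b > 0" using l by simp
            have "f (l * x) \<ge> D * l powr b * f x" using h x l by simp
            then have "D \<le> f (l * x) / (l powr b * f x)"
              using fx lp by (simp add: le_divide_eq mult_ac)
            then show "ereal D \<le> ereal (f (l * x) / (l powr b * f x))" by simp
          qed
        qed
      qed
    qed
  qed
  have eps: "b - e \<in> Bset f" if bS: "b \<in> S" and e: "e > 0" for b e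
  proof -
    obtain D where D: "D > 0" and hD: "\<And>\<Lambda>. \<Lambda> > 1 \<Longrightarrow>
        Liminf at_top (\<lambda>x. INF l\<in>{1..\<Lambda>}. ereal (f (l * x) / (l powr b * f x))) \<ge> ereal D"
      using bS unfolding S_def by blast
    define D' where "D' = min (D / 2) 1"
    have D'0: "D' > 0" and D'1: "D' \<le> 1" unfolding D'_def using D by auto
    define L where "L = max 1 (- ln D' / e)"
    define \<Lambda> where "\<Lambda> = exp L"
    have L: "L > 0" unfolding L_def by simp
    have \<Lambda>1: "\<Lambda> > 1" unfolding \<Lambda>_def using L by simp
    have hL: "- ln D' \<le> e * L"
    proof -
      have "- ln D' = e * (- ln D' / e)" using e by simp
      also have "\<dots> \<le> e * L" unfolding L_def using e by (intro mult_left_mono) auto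
      finally show ?thesis .
    qed
    have "ereal (D / 2) < Liminf at_top (\<lambda>x. INF l\<in>{1..\<Lambda>}. ereal (f (l * x) / (l powr b * f x)))"
    proof -
      have "ereal (D / 2) < ereal D" using D by simp
      then show ?thesis using hD[OF \<Lambda>1] by (rule less_le_trans)
    qed
    from less_LiminfD[OF this] obtain x2 where x2: "\<And>x. x \<ge> x2 \<Longrightarrow>
        (INF l\<in>{1..\<Lambda>}. ereal (f (l * x) / (l powr b * f x))) > ereal (D / 2)"
      unfolding eventually_at_top_linorder by blast
    define x0 where "x0 = max (max x1 x2) 1"
    have base: "f (l * x) \<ge> D' * l powr b * f x" if x: "x \<ge> x0" and l: "1 \<le> l" "l \<le> \<Lambda>" for x l
    proof -
      have "ereal (D / 2) < (INF l\<in>{1..\<Lambda>}. ereal (f (l * x) / (l powr b * f x)))" using x2 x unfolding x0_def by simp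
      also have "\<dots> \<le> ereal (f (l * x) / (l powr b * f x))"
        using l by (intro INF_lower) auto
      finally have r: "D / 2 < f (l * x) / (l powr b * f x)" by simp
      have fx: "f x > 0" using pos x unfolding x0_def by simp
      have lp: "l powr b > 0" using l by simp
      have "D' * (l powr b * f x) \<le> D / 2 * (l powr b * f x)" unfolding D'_def using fx lp
        by (intro mult_right_mono) auto
      also have "\<dots> < f (l * x)" using r fx lp by (simp add: less_divide_eq)
      finally show ?thesis by (simp add: mult_ac)
    qed
    have iter: "\<forall>x\<ge>x0. \<forall>l. 1 \<le> l \<longrightarrow> l \<le> \<Lambda> ^ (k + 1) \<longrightarrow> f (l * x) \<ge> D' ^ (k + 1) * l powr b * f x" for k
    proof (induction k)
      case 0
      then show ?case using base by simp
    next
      case (Suc k)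
      show ?case
      proof (intro allI impI)
        fix x l assume x: "x \<ge> x0" and l1: "1 \<le> l" and l2: "l \<le> \<Lambda> ^ (Suc k + 1)"
        have fx: "f x > 0" using pos x unfolding x0_def by simp
        show "f (l * x) \<ge> D' ^ (Suc k + 1) * l powr b * f x"
        proof (cases "l \<le> \<Lambda> ^ (k + 1)")
          case True
          have "D' ^ (Suc k + 1) * l powr b * f x \<le> D' ^ (k + 1) * l powr b * f x"
            using fx D'0 D'1 by (intro mult_right_mono power_decreasing) auto
          also have "\<dots> \<le> f (l * x)" using Suc x l1 True by blast
          finally show ?thesis .
        next
          case False
          define \<mu> where "\<mu> = l / \<Lambda>"
          have \<Lambda>k: "\<Lambda> ^ (k + 1) \<ge> \<Lambda>" using power_increasing[of 1 "k+1" \<Lambda>] \<Lambda>1 by simp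
          have "\<Lambda> \<le> l" using False \<Lambda>k by linarith
          then have \<mu>1: "\<mu> \<ge> 1" unfolding \<mu>_def using \<Lambda>1 by (simp add: le_divide_eq)
          have \<mu>2: "\<mu> \<le> \<Lambda> ^ (k + 1)" unfolding \<mu>_def using l2 \<Lambda>1 by (simp add: divide_le_eq mult.commute)
          have x0p: "x0 \<ge> 1" unfolding x0_def by simp
          have \<mu>x: "\<mu> * x \<ge> x0"
          proof -
            have "1 * x \<le> \<mu> * x" using \<mu>1 x x0p by (intro mult_right_mono) auto
            then show ?thesis using x by simp
          qed
          have lx: "l * x = \<Lambda> * (\<mu> * x)" unfolding \<mu>_def using \<Lambda>1 by simp
          have "D' ^ (Suc k + 1) * l powr b * f x = D' * \<Lambda> powr b * (D' ^ (k + 1) * \<mu> powr b * f x)"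
          proof -
            have "\<Lambda> * \<mu> = l" unfolding \<mu>_def using \<Lambda>1 by simp
            then have "l powr b = \<Lambda> powr b * \<mu> powr b" using \<Lambda>1 \<mu>1 by (metis powr_mult less_le_trans zero_less_one less_imp_le)
            then show ?thesis by (simp add: mult_ac)
          qed
          also have "\<dots> \<le> D' * \<Lambda> powr b * f (\<mu> * x)"
            using Suc \<mu>1 \<mu>2 x D'0 by (intro mult_left_mono) auto
          also have "\<dots> \<le> f (l * x)"
            unfolding lx using base[OF \<mu>x] \<Lambda>1 by simp
          finally show ?thesis .
        qed
      qed
    qed
    have "\<forall>x\<ge>x0. \<forall>l\<ge>1. f (l * x) \<ge> D' * l powr (b - e) * f x"
    proof (intro allI impI)
      fix x l :: real assume x: "x \<ge> x0" and l: "1 \<le> l"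
      define k where "k = nat \<lfloor>ln l / L\<rfloor>"
      have k1: "real k * L \<le> ln l" and k2: "ln l < (real k + 1) * L"
        using floor_log_bounds[OF L l] unfolding k_def by auto
      have "l = exp (ln l)" using l by simp
      also have "\<dots> \<le> exp ((real k + 1) * L)" using k2 by simp
      also have "\<dots> = \<Lambda> ^ (k + 1)" unfolding \<Lambda>_def
        by (metis exp_of_nat_mult of_nat_Suc Suc_eq_plus1 add.commute)
      finally have lk: "l \<le> \<Lambda> ^ (k + 1)" .
      have fx: "f x > 0" using pos x unfolding x0_def by simp
      have "D' * l powr (b - e) * f x = D' * l powr (- e) * l powr b * f x"
        using l by (simp add: powr_add[symmetric])
      also have "\<dots> \<le> D' * D' ^ k * l powr b * f x"
        using pow_ge_powr_aux[OF L D'0 D'1 hL e k1 l] fx D'0 l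
        by (intro mult_right_mono mult_left_mono) auto
      also have "\<dots> = D' ^ (k + 1) * l powr b * f x" by simp
      also have "\<dots> \<le> f (l * x)" using iter x l lk by blast
      finally show "f (l * x) \<ge> D' * l powr (b - e) * f x" .
    qed
    then show "b - e \<in> Bset f" unfolding Bset_def using D'0 by blast
  qed
  show ?thesis unfolding bS
  proof (rule antisym)
    show "Sup (ereal ` Bset f) \<le> Sup (ereal ` S)" using sub by (intro Sup_subset_mono image_mono)
    show "Sup (ereal ` S) \<le> Sup (ereal ` Bset f)"
    proof (rule Sup_least)
      fix y assume "y \<in> ereal ` S"
      then obtain b where b: "b \<in> S" and y: "y = ereal b" by auto
      show "y \<le> Sup (ereal ` Bset f)" unfolding y
      proof (rule ereal_le_epsilon2)
        fix e :: real assume "0 < e"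
        then have "ereal (b - e) \<le> Sup (ereal ` Bset f)" using eps[OF b] by (intro Sup_upper) auto
        then have "ereal (b - e) + ereal e \<le> Sup (ereal ` Bset f) + ereal e" by (rule add_right_mono)
        then show "ereal b \<le> Sup (ereal ` Bset f) + ereal e" by simp
      qed
    qed
  qed
qed

lemma inv_lemma:
  fixes A B :: "real set"
  assumes A: "A \<subseteq> {0<..}" and B0: "0 \<in> B"
    and h3: "\<And>b. b \<in> B \<Longrightarrow> b > 0 \<Longrightarrow> \<exists>a\<in>A. a \<le> 1 / b"
    and h4: "\<And>a g. a \<in> A \<Longrightarrow> 0 < g \<Longrightarrow> g < 1 / a \<Longrightarrow> \<exists>b\<in>B. g \<le> b"
  shows "Sup (ereal ` B) = inverse (Inf (ereal ` A))"
proof -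
  define \<alpha> where "\<alpha> = Inf (ereal ` A)"
  have \<alpha>0: "\<alpha> \<ge> 0" unfolding \<alpha>_def using A by (intro Inf_greatest) auto
  have S0: "0 \<le> Sup (ereal ` B)" using B0 by (metis Sup_upper image_eqI zero_ereal_def)
  show ?thesis unfolding \<alpha>_def[symmetric]
  proof (rule antisym)
    show "Sup (ereal ` B) \<le> inverse \<alpha>"
    proof (rule Sup_least)
      fix y assume "y \<in> ereal ` B"
      then obtain b where b: "b \<in> B" and y: "y = ereal b" by auto
      show "y \<le> inverse \<alpha>"
      proof (cases "b > 0")
        case False
        then have "y \<le> 0" unfolding y by simp
        also have "0 \<le> inverse \<alpha>" using \<alpha>0 by (rule inverse_ereal_ge0I)
        finally show ?thesis .
      next
        case True
        obtain a where a: "a \<in> A" "a \<le> 1 / b" using h3[OF b True] by blast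
        have "\<alpha> \<le> ereal a" unfolding \<alpha>_def using a by (intro Inf_lower) auto
        also have "\<dots> \<le> ereal (1 / b)" using a by simp
        finally have "inverse (ereal (1 / b)) \<le> inverse \<alpha>" by (rule ereal_inverse_antimono[OF \<alpha>0])
        then show ?thesis unfolding y using True by simp
      qed
    qed
  next
    show "inverse \<alpha> \<le> Sup (ereal ` B)"
    proof (rule dense_le)
      fix x assume x: "x < inverse \<alpha>"
      show "x \<le> Sup (ereal ` B)"
      proof (cases "x \<le> 0")
        case True
        then show ?thesis using S0 by simp
      next
        case False
        then have "x \<noteq> \<infinity>" using x by auto
        with False obtain g where g: "x = ereal g" "g > 0" by (cases x) auto
        have "\<alpha> < ereal (1 / g)"
        proof (rule ccontr)
          assume "\<not> \<alpha> < ereal (1 / g)"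
          then have "ereal (1 / g) \<le> \<alpha>" by simp
          then have "inverse \<alpha> \<le> inverse (ereal (1 / g))"
            using g by (intro ereal_inverse_antimono) auto
          then show False using x g by simp
        qed
        then obtain a where a: "a \<in> A" "ereal a < ereal (1 / g)"
          unfolding \<alpha>_def by (auto simp: Inf_less_iff)
        have a0: "a > 0" using A a by auto
        have "g < 1 / a" using a a0 g by (simp add: field_simps)
        then obtain b where b: "b \<in> B" "g \<le> b" using h4[OF a(1) g(2)] by blast
        have "x \<le> ereal b" using g b by simp
        also have "\<dots> \<le> Sup (ereal ` B)" using b by (intro Sup_upper) auto
        finally show ?thesis .
      qed
    qed
  qed
qed

lemma inv_lemma':
  fixes A B :: "real set"
  assumes A: "A \<subseteq> {0<..}" and B0: "0 \<in> B"
    and h3: "\<And>b. b \<in> B \<Longrightarrow> b > 0 \<Longrightarrow> \<exists>a\<in>A. a \<le> 1 / b"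
    and h4: "\<And>a g. a \<in> A \<Longrightarrow> 0 < g \<Longrightarrow> g < 1 / a \<Longrightarrow> \<exists>b\<in>B. g \<le> b"
  shows "Inf (ereal ` A) = inverse (Sup (ereal ` B))"
proof -
  have \<alpha>0: "Inf (ereal ` A) \<ge> 0" using A by (intro Inf_greatest) auto
  then have "Inf (ereal ` A) \<noteq> -\<infinity>" by auto
  moreover have "Sup (ereal ` B) = inverse (Inf (ereal ` A))" by (rule inv_lemma[OF assms])
  ultimately show ?thesis by simp
qed

lemma powr_le1_aux: "1 \<le> (l::real) \<Longrightarrow> b \<le> 0 \<Longrightarrow> l powr b \<le> 1"
  using powr_mono[of b 0 l] by simp

lemma Aset_pos:
  fixes f :: "real \<Rightarrow> real"
  assumes pos: "\<And>x. x \<ge> x1 \<Longrightarrow> f x > 0"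
    and mono: "\<And>x y. x1 \<le> x \<Longrightarrow> x \<le> y \<Longrightarrow> f x \<le> f y"
    and unb: "\<And>B z. \<exists>y\<ge>z. f y > B"
  shows "Aset f \<subseteq> {0<..}"
proof
  fix a assume "a \<in> Aset f"
  then obtain C x0 where C: "C > 0" and h: "\<And>x l. x \<ge> x0 \<Longrightarrow> l \<ge> 1 \<Longrightarrow> f (l * x) \<le> C * l powr a * f x"
    unfolding Aset_def by blast
  show "a \<in> {0<..}"
  proof (rule ccontr)
    assume "a \<notin> {0<..}"
    then have a: "a \<le> 0" by simp
    define x where "x = max (max x0 x1) 1"
    have fx: "f x > 0" using pos unfolding x_def by simp
    obtain y where y: "y \<ge> x" "f y > C * f x" using unb by blast
    define l where "l = y / x"
    have x1': "x \<ge> 1" unfolding x_def by simp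
    have l1: "l \<ge> 1" unfolding l_def using y x1' by simp
    have lx: "l * x = y" unfolding l_def using x1' by simp
    have "f y \<le> C * l powr a * f x" using h[of x l] l1 lx unfolding x_def by simp
    also have "\<dots> \<le> C * 1 * f x" using C fx l1 a
      by (intro mult_right_mono mult_left_mono) (auto intro: powr_le1_aux)
    finally show False using y by simp
  qed
qed

lemma Bset_nonpos:
  fixes f :: "real \<Rightarrow> real"
  assumes pos: "\<And>x. x \<ge> x1 \<Longrightarrow> f x > 0"
    and mono: "\<And>x y. x1 \<le> x \<Longrightarrow> x \<le> y \<Longrightarrow> f x \<le> f y"
    and b: "b \<le> 0"
  shows "b \<in> Bset f"
proof -
  have "\<forall>x\<ge>max x1 1. \<forall>l\<ge>1. f (l * x) \<ge> 1 * l powr b * f x"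
  proof (intro allI impI)
    fix x l :: real assume x: "max x1 1 \<le> x" and l: "1 \<le> l"
    have fx: "f x > 0" using pos x by simp
    have "1 * l powr b * f x \<le> 1 * 1 * f x" using fx l b
      by (intro mult_right_mono mult_left_mono) (auto intro: powr_le1_aux)
    also have "\<dots> \<le> f (l * x)" using mono[of x "l * x"] x l
      by (simp add: mult_right_mono[of 1 l x, simplified])
    finally show "1 * l powr b * f x \<le> f (l * x)" .
  qed
  then show ?thesis unfolding Bset_def using zero_less_one by blast
qed

lemma ceil_log_bounds:
  fixes L l :: real
  assumes L: "L > 0" and l: "l \<ge> 1"
  defines "n \<equiv> nat \<lceil>ln l / L\<rceil>"
  shows "ln l \<le> real n * L" "real n * L < ln l + L"
proof -
  have nn: "ln l / L \<ge> 0" using l L by simp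
  have "real n = of_int \<lceil>ln l / L\<rceil>" using nn unfolding n_def by simp
  then have k1: "ln l / L \<le> real n" and k2: "real n < ln l / L + 1" by linarith+
  show "ln l \<le> real n * L" using k1 L by (simp add: pos_divide_le_eq)
  have "real n * L < (ln l / L + 1) * L" using k2 L by (intro mult_strict_right_mono) auto
  also have "\<dots> = ln l + L" using L by (simp add: field_simps)
  finally show "real n * L < ln l + L" .
qed

lemma D1_lemma:
  fixes \<sigma> :: "real \<Rightarrow> real"
  assumes pos: "\<And>x. x \<ge> x1 \<Longrightarrow> \<sigma> x > 0"
    and a: "a \<in> Aset \<sigma>" and g: "g > 0" and ga: "g * a < 1"
  shows "P_fun \<sigma> g"
proof -
  obtain C x0 where C: "C > 0" and h: "\<And>x l. x \<ge> x0 \<Longrightarrow> l \<ge> 1 \<Longrightarrow> \<sigma> (l * x) \<le> C * l powr a * \<sigma> x"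
    using a unfolding Aset_def by blast
  define e where "e = 1 - g * a"
  have e: "e > 0" unfolding e_def using ga by simp
  define K where "K = max 2 ((C + 1) powr (1 / e))"
  have K1: "K > 1" unfolding K_def by simp
  have "C + 1 = ((C + 1) powr (1 / e)) powr e" using e C by (simp add: powr_powr)
  also have "\<dots> \<le> K powr e" unfolding K_def using e by (intro powr_mono2) auto
  finally have KC: "C + 1 \<le> K powr e" .
  have Kge: "K powr g \<ge> 1" using K1 g by (simp add: ge_one_powr_ge_zero)
  have "C * K powr (g * a) < (C + 1) * K powr (g * a)" using K1 by simp
  also have "\<dots> \<le> K powr e * K powr (g * a)" using KC by (intro mult_right_mono) auto
  also have "\<dots> = K" using K1 unfolding e_def by (simp add: powr_add[symmetric])
  finally have CK: "C * K powr (g * a) < K" .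
  have "Limsup at_top (\<lambda>t. ereal (\<sigma> (K powr g * t) / \<sigma> t)) \<le> ereal (C * K powr (g * a))"
  proof (rule Limsup_bounded)
    show "\<forall>\<^sub>F t in at_top. ereal (\<sigma> (K powr g * t) / \<sigma> t) \<le> ereal (C * K powr (g * a))"
      unfolding eventually_at_top_linorder
    proof (intro exI[of _ "max x0 x1"] allI impI)
      fix t assume t: "max x0 x1 \<le> t"
      have st: "\<sigma> t > 0" using pos t by simp
      have "\<sigma> (K powr g * t) \<le> C * (K powr g) powr a * \<sigma> t" using h t Kge by simp
      also have "(K powr g) powr a = K powr (g * a)" by (simp add: powr_powr)
      finally have "\<sigma> (K powr g * t) / \<sigma> t \<le> C * K powr (g * a)" using st by (simp add: divide_le_eq)
      then show "ereal (\<sigma> (K powr g * t) / \<sigma> t) \<le> ereal (C * K powr (g * a))" by simp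
    qed
  qed
  also have "\<dots> < ereal K" using CK by simp
  finally show ?thesis unfolding P_fun_def using K1 by blast
qed

lemma D2_lemma:
  fixes \<sigma> :: "real \<Rightarrow> real"
  assumes pos: "\<And>x. x \<ge> x1 \<Longrightarrow> \<sigma> x > 0"
    and mono: "\<And>x y. x1 \<le> x \<Longrightarrow> x \<le> y \<Longrightarrow> \<sigma> x \<le> \<sigma> y"
    and g: "g > 0" and P: "P_fun \<sigma> g"
  shows "1 / g \<in> Aset \<sigma>"
proof -
  obtain K where K1: "K > 1" and lim: "Limsup at_top (\<lambda>t. ereal (\<sigma> (K powr g * t) / \<sigma> t)) < ereal K"
    using P unfolding P_fun_def by blast
  from Limsup_lessD[OF lim] obtain t2 where t2: "\<And>t. t \<ge> t2 \<Longrightarrow> ereal (\<sigma> (K powr g * t) / \<sigma> t) < ereal K"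
    unfolding eventually_at_top_linorder by blast
  define t0 where "t0 = max (max x1 t2) 1"
  define q where "q = K powr g"
  have q1: "q > 1" unfolding q_def using K1 g by (simp add: gr_one_powr)
  have step: "\<sigma> (q * t) \<le> K * \<sigma> t" if t: "t \<ge> t0" for t
  proof -
    have st: "\<sigma> t > 0" using pos t unfolding t0_def by simp
    have "\<sigma> (q * t) / \<sigma> t < K" using t2[of t] t unfolding t0_def q_def by simp
    then show ?thesis using st by (simp add: divide_less_eq)
  qed
  have iter: "\<forall>t\<ge>t0. \<sigma> (q ^ n * t) \<le> K ^ n * \<sigma> t" for n
  proof (induction n)
    case 0 then show ?case by simp
  next
    case (Suc n)
    show ?case
    proof (intro allI impI)
      fix t assume t: "t \<ge> t0"
      have t1: "t \<ge> 1" using t unfolding t0_def by simp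
      have qn: "q ^ n \<ge> 1" using q1 by (simp add: one_le_power)
      have "1 * t \<le> q ^ n * t" using qn t1 by (intro mult_right_mono) auto
      then have qt: "q ^ n * t \<ge> t0" using t by simp
      have "\<sigma> (q ^ Suc n * t) = \<sigma> (q * (q ^ n * t))" by (simp add: mult_ac)
      also have "\<dots> \<le> K * \<sigma> (q ^ n * t)" using step[OF qt] .
      also have "\<dots> \<le> K * (K ^ n * \<sigma> t)" using Suc t K1 by (intro mult_left_mono) auto
      finally show "\<sigma> (q ^ Suc n * t) \<le> K ^ Suc n * \<sigma> t" by simp
    qed
  qed
  have "\<forall>t\<ge>t0. \<forall>l\<ge>1. \<sigma> (l * t) \<le> K * l powr (1 / g) * \<sigma> t"
  proof (intro allI impI)
    fix t l :: real assume t: "t \<ge> t0" and l: "1 \<le> l"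
    define Lq where "Lq = ln q"
    have Lq: "Lq > 0" unfolding Lq_def using q1 by simp
    have Lqg: "Lq = g * ln K" unfolding Lq_def q_def using K1 by (simp add: ln_powr)
    define n where "n = nat \<lceil>ln l / Lq\<rceil>"
    have n1: "ln l \<le> real n * Lq" and n2: "real n * Lq < ln l + Lq"
      using ceil_log_bounds[OF Lq l] unfolding n_def by auto
    have t1: "t \<ge> 1" using t unfolding t0_def by simp
    have st: "\<sigma> t > 0" using pos t unfolding t0_def by simp
    have "l = exp (ln l)" using l by simp
    also have "\<dots> \<le> exp (real n * Lq)" using n1 by simp
    also have "\<dots> = q ^ n" unfolding Lq_def using q1 by (simp add: exp_of_nat_mult)
    finally have lq: "l \<le> q ^ n" .
    have "1 * t \<le> l * t" using l t1 by (intro mult_right_mono) auto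
    then have ltt: "t \<le> l * t" by simp
    have "x1 \<le> l * t" using ltt t unfolding t0_def by linarith
    moreover have "l * t \<le> q ^ n * t" using lq t1 by (intro mult_right_mono) auto
    ultimately have "\<sigma> (l * t) \<le> \<sigma> (q ^ n * t)" by (rule mono)
    also have "\<dots> \<le> K ^ n * \<sigma> t" using iter t by blast
    also have "K ^ n \<le> K * l powr (1 / g)"
    proof -
      have "real n * ln K < ln l / g + ln K"
      proof -
        have "real n * Lq < ln l + Lq" by (rule n2)
        then have "g * (real n * ln K) < ln l + g * ln K" unfolding Lqg by (simp add: mult_ac)
        also have "\<dots> = g * (ln l / g + ln K)" using g by (simp add: field_simps)
        finally show ?thesis using g by (simp only: mult_less_cancel_left_pos)
      qed
      have "K ^ n = exp (real n * ln K)" using K1 by (simp add: exp_of_nat_mult)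
      also have "\<dots> \<le> exp (ln K + ln l / g)" using \<open>real n * ln K < ln l / g + ln K\<close> by simp
      also have "\<dots> = K * l powr (1 / g)" using K1 l by (simp add: exp_add powr_def)
      finally show ?thesis .
    qed
    then have "K ^ n * \<sigma> t \<le> K * l powr (1 / g) * \<sigma> t" using st by (intro mult_right_mono) auto
    finally show "\<sigma> (l * t) \<le> K * l powr (1 / g) * \<sigma> t" .
  qed
  then show ?thesis unfolding Aset_def using K1 by (intro CollectI) (meson less_trans zero_less_one)
qed

lemma gamma_lemma:
  fixes \<sigma> :: "real \<Rightarrow> real"
  assumes pos: "\<And>x. x \<ge> x1 \<Longrightarrow> \<sigma> x > 0"
    and mono: "\<And>x y. x1 \<le> x \<Longrightarrow> x \<le> y \<Longrightarrow> \<sigma> x \<le> \<sigma> y"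
    and unb: "\<And>B z. \<exists>y\<ge>z. \<sigma> y > B"
  shows "gamma_fun \<sigma> = inverse (Inf (ereal ` Aset \<sigma>))"
proof -
  define P where "P = {g. g > 0 \<and> P_fun \<sigma> g}"
  have gf: "gamma_fun \<sigma> = Sup (ereal ` insert 0 P)"
  proof (cases "P = {}")
    case True
    then show ?thesis unfolding gamma_fun_def P_def[symmetric] by (simp add: zero_ereal_def)
  next
    case False
    then obtain g where g: "g \<in> P" by blast
    then have "0 \<le> ereal g" unfolding P_def by simp
    also have "\<dots> \<le> Sup (ereal ` P)" using g by (intro Sup_upper) auto
    finally have "sup 0 (Sup (ereal ` P)) = Sup (ereal ` P)" by (simp add: sup_absorb2)
    moreover have "{ereal g | g. g > 0 \<and> P_fun \<sigma> g} = ereal ` P" unfolding P_def by auto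
    ultimately show ?thesis using False unfolding gamma_fun_def P_def[symmetric]
      by (simp add: zero_ereal_def[symmetric])
  qed
  show ?thesis unfolding gf
  proof (rule inv_lemma)
    show "Aset \<sigma> \<subseteq> {0<..}" by (rule Aset_pos[OF pos mono unb])
    show "0 \<in> insert 0 P" by simp
    fix b assume b: "b \<in> insert 0 P" "b > 0"
    then have "b \<in> P" by auto
    then have bP: "b > 0" "P_fun \<sigma> b" unfolding P_def by auto
    have "1 / b \<in> Aset \<sigma>" by (rule D2_lemma[where \<sigma>=\<sigma>, OF pos mono bP])
    then show "\<exists>a\<in>Aset \<sigma>. a \<le> 1 / b" by blast
  next
    fix a g assume a: "a \<in> Aset \<sigma>" and g: "0 < g" "g < 1 / a"
    have a0: "a > 0" using Aset_pos[OF pos mono unb] a by auto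
    have "g * a < 1" using g a0 by (simp add: field_simps)
    then have "g \<in> P" unfolding P_def using D1_lemma[where \<sigma>=\<sigma>, OF pos a g(1)] g by blast
    then show "\<exists>b\<in>insert 0 P. g \<le> b" by blast
  qed
qed

locale wseq =
  fixes M :: "nat \<Rightarrow> real"
  assumes ws: "weight_seq M"
begin

abbreviation m where "m \<equiv> quot M"

lemma M0: "M 0 = 1" and Mpos: "M p > 0"
  using ws unfolding weight_seq_def by auto

lemma m_pos: "m p > 0"
  unfolding quot_def using Mpos[of p] Mpos[of "Suc p"] by simp

lemma M_Suc: "M (Suc p) = m p * M p"
  unfolding quot_def using Mpos[of p] by simp

lemma m_Suc_mono: "m p \<le> m (Suc p)"
proof -
  have "\<forall>q\<ge>1. (M q)^2 \<le> M (q - 1) * M (q + 1)" using ws unfolding weight_seq_def by blast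
  then have h: "(M (Suc p))^2 \<le> M p * M (Suc (Suc p))" by (metis Suc_eq_plus1 diff_Suc_1 le_add2)
  have a: "M (Suc (Suc p)) = m (Suc p) * (m p * M p)" using M_Suc[of "Suc p"] M_Suc[of p] by simp
  have b: "M (Suc p) = m p * M p" using M_Suc[of p] by simp
  have "(m p * M p)^2 \<le> M p * (m (Suc p) * (m p * M p))" using h a b by simp
  then have "(m p * M p) * (m p * M p) \<le> (m (Suc p) * M p) * (m p * M p)" by (simp add: power2_eq_square mult_ac)
  then have "m p * M p \<le> m (Suc p) * M p" using m_pos[of p] Mpos[of p] by (simp add: mult_le_cancel_right_pos)
  then show ?thesis using Mpos[of p] by simp
qed

lemma m_mono: "i \<le> j \<Longrightarrow> m i \<le> m j"
  using m_Suc_mono by (rule lift_Suc_mono_le)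

lemma m_unb: "\<exists>j. m j > t"
proof (rule ccontr)
  assume "\<not> (\<exists>j. m j > t)"
  then have mt: "\<And>j. m j \<le> t" by (simp add: not_less)
  have t0: "t > 0" using mt[of 0] m_pos[of 0] by simp
  have Mle: "M p \<le> t ^ p" for p
  proof (induction p)
    case 0 then show ?case using M0 by simp
  next
    case (Suc p)
    have "M (Suc p) = m p * M p" by (rule M_Suc)
    also have "\<dots> \<le> t * t ^ p" using mt[of p] Suc Mpos[of p] m_pos[of p] t0
      by (intro mult_mono) auto
    finally show ?case by simp
  qed
  have "filterlim (\<lambda>p. root p (M p)) at_top sequentially" using ws unfolding weight_seq_def by simp
  then have "\<forall>\<^sub>F p in sequentially. t < root p (M p)" unfolding filterlim_at_top_dense by blast
  moreover have "\<forall>\<^sub>F p in sequentially. p > (0::nat)" by (simp add: eventually_gt_at_top)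
  ultimately have "\<forall>\<^sub>F p in sequentially. t < root p (M p) \<and> p > 0" by (rule eventually_conj)
  then obtain N where "\<forall>p\<ge>N. t < root p (M p) \<and> p > 0" unfolding eventually_sequentially by blast
  then obtain p where p: "t < root p (M p)" "p > 0" by blast
  have "root p (M p) \<le> root p (t ^ p)" using p Mle by (intro real_root_le_mono) auto
  also have "\<dots> = t" using p t0 by (simp add: real_root_pos2)
  finally show False using p by simp
qed

definition nn :: "real \<Rightarrow> nat" where "nn t = card {j. m j \<le> t}"

lemma set_eq: "{j. m j \<le> t} = {..<nn t}"
proof -
  obtain J where J: "m J > t" using m_unb by blast
  define N where "N = (LEAST j. m j > t)"
  have N: "m N > t" unfolding N_def using J by (rule LeastI)
  have "{j. m j \<le> t} = {..<N}"
  proof (intro set_eqI iffI)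
    fix j assume "j \<in> {j. m j \<le> t}"
    then have "m j \<le> t" by simp
    then show "j \<in> {..<N}" using N m_mono[of N j] by (cases "N \<le> j") auto
  next
    fix j assume "j \<in> {..<N}"
    then have "j < N" by simp
    then show "j \<in> {j. m j \<le> t}" unfolding N_def using not_less_Least by fastforce
  qed
  then show ?thesis unfolding nn_def by simp
qed

lemma nn_iff: "m j \<le> t \<longleftrightarrow> j < nn t"
  using set_eq[of t] by blast

lemma nu_eq: "nu_c m t = real (nn t)"
  unfolding nu_c_def nn_def by simp

lemma nn_mono: "t \<le> t' \<Longrightarrow> nn t \<le> nn t'"
proof -
  assume "t \<le> t'"
  then have "{j. m j \<le> t} \<subseteq> {j. m j \<le> t'}" by auto
  then have "{..<nn t} \<subseteq> {..<nn t'}" unfolding set_eq .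
  then show ?thesis by simp
qed

lemma nn_ge: "m k \<le> t \<Longrightarrow> nn t \<ge> Suc k"
  using nn_iff by (simp add: Suc_le_eq)

definition L :: "real \<Rightarrow> nat \<Rightarrow> real" where "L t p = real p * ln t - ln (M p)"

lemma L_0: "L t 0 = 0" unfolding L_def using M0 by simp

lemma L_Suc: "L t (Suc p) = L t p + ln t - ln (m p)"
  unfolding L_def M_Suc using m_pos[of p] Mpos[of p] by (simp add: ln_mult algebra_simps)

lemma L_up: "t > 0 \<Longrightarrow> p < nn t \<Longrightarrow> L t p \<le> L t (Suc p)"
  unfolding L_Suc using nn_iff[of p t] m_pos[of p] by simp

lemma L_down: "t > 0 \<Longrightarrow> p \<ge> nn t \<Longrightarrow> L t (Suc p) \<le> L t p"
  unfolding L_Suc using nn_iff[of p t] m_pos[of p] by simp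

lemma L_max: assumes t: "t > 0" shows "L t p \<le> L t (nn t)"
proof -
  have up: "p + d \<le> nn t \<Longrightarrow> L t p \<le> L t (p + d)" for d
  proof (induction d)
    case 0 then show ?case by simp
  next
    case (Suc d)
    then have "L t p \<le> L t (p + d)" by simp
    also have "\<dots> \<le> L t (Suc (p + d))" using Suc.prems by (intro L_up[OF t]) simp
    finally show ?case by simp
  qed
  have down: "L t (nn t + d) \<le> L t (nn t)" for d
  proof (induction d)
    case 0 then show ?case by simp
  next
    case (Suc d)
    have "L t (nn t + Suc d) \<le> L t (nn t + d)" using L_down[OF t, of "nn t + d"] by simp
    with Suc show ?case by simp
  qed
  show ?thesis
  proof (cases "p \<le> nn t")
    case True then show ?thesis using up[of "nn t - p"] by simp
  next
    case False then show ?thesis using down[of "p - nn t"] by simp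
  qed
qed

lemma omega_eq: assumes t: "t > 0" shows "omega_w M t = L t (nn t)"
proof -
  have eq: "ln (t ^ p / M p) = L t p" for p
    unfolding L_def using t Mpos[of p] by (simp add: ln_div ln_realpow)
  have "omega_w M t = Sup (range (L t))" unfolding omega_w_def using t eq by simp
  also have "\<dots> = L t (nn t)" using L_max[OF t] by (intro cSup_eq_maximum) auto
  finally show ?thesis .
qed

lemma omega_ge: "t > 0 \<Longrightarrow> L t p \<le> omega_w M t"
  using omega_eq L_max by simp

lemma omega_nonneg: "t > 0 \<Longrightarrow> omega_w M t \<ge> 0"
  using omega_ge[of t 0] L_0 by simp

lemma L_scale: "H > 0 \<Longrightarrow> t > 0 \<Longrightarrow> L (H * t) p = real p * ln H + L t p"
  unfolding L_def by (simp add: ln_mult algebra_simps)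

lemma omega_w2: "t > 0 \<Longrightarrow> real (nn t) + omega_w M t \<le> omega_w M (exp 1 * t)"
  using omega_ge[of "exp 1 * t" "nn t"] L_scale[of "exp 1" t "nn t"] omega_eq[of t] by simp

lemma omega_w3: "H \<ge> 1 \<Longrightarrow> t > 0 \<Longrightarrow> omega_w M (H * t) \<le> real (nn (H * t)) * ln H + omega_w M t"
  using omega_eq[of "H * t"] L_scale[of H t "nn (H * t)"] omega_ge[of t "nn (H * t)"] by simp

lemma omega_mono: "0 < t \<Longrightarrow> t \<le> t' \<Longrightarrow> omega_w M t \<le> omega_w M t'"
proof -
  assume t: "0 < t" "t \<le> t'"
  have "L t (nn t) \<le> L t' (nn t)" unfolding L_def using t by (simp add: mult_left_mono)
  then show ?thesis using omega_eq[of t] omega_ge[of t' "nn t"] t by simp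
qed

lemma omega_w5: "t > 0 \<Longrightarrow> ln t - ln (m 0) \<le> omega_w M t"
  using omega_ge[of t 1] unfolding L_def using M_Suc[of 0] M0 by simp

lemma omega_w6:
  assumes mg: "moderate_growth M"
  shows "\<exists>H\<ge>exp 1. \<forall>t>0. 2 * omega_w M t \<le> omega_w M (H * t)"
proof -
  obtain A where A: "A > 0" and hA: "\<And>p q. M (p + q) \<le> A ^ (p + q) * M p * M q"
    using mg unfolding moderate_growth_def by blast
  define H where "H = max A (exp 1)"
  have H: "H \<ge> exp 1" "H \<ge> A" unfolding H_def by auto
  have Hp: "H > 0" using H(1) by (meson exp_gt_zero less_le_trans)
  have "2 * omega_w M t \<le> omega_w M (H * t)" if t: "t > 0" for t
  proof -
    let ?p = "nn t"
    have "M (?p + ?p) \<le> A ^ (?p + ?p) * M ?p * M ?p" by (rule hA)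
    also have "\<dots> \<le> H ^ (?p + ?p) * M ?p * M ?p" using A H Mpos[of ?p]
      by (intro mult_right_mono power_mono) auto
    finally have Mle: "M (2 * ?p) \<le> H ^ (2 * ?p) * (M ?p * M ?p)" by (simp add: mult_2 mult_ac)
    have "ln (M (2 * ?p)) \<le> ln (H ^ (2 * ?p) * (M ?p * M ?p))"
      using Mle Mpos[of "2 * ?p"] by simp
    also have "\<dots> = real (2 * ?p) * ln H + 2 * ln (M ?p)" using Hp Mpos[of ?p]
      by (simp add: ln_mult ln_realpow)
    finally have lnM: "ln (M (2 * ?p)) \<le> real (2 * ?p) * ln H + 2 * ln (M ?p)" .
    have "2 * omega_w M t = 2 * L t ?p" using omega_eq[OF t] by simp
    also have "\<dots> \<le> L (H * t) (2 * ?p)" unfolding L_def using lnM Hp t by (simp add: ln_mult algebra_simps)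
    also have "\<dots> \<le> omega_w M (H * t)" using Hp t by (intro omega_ge) simp
    finally show ?thesis .
  qed
  then show ?thesis using H by blast
qed

definition s :: "real \<Rightarrow> real" where "s x = step_fun m x"

lemma s_iff: assumes x: "x \<ge> 1" shows "s x \<le> t \<longleftrightarrow> x < real (nn t) + 1"
proof -
  have f1: "nat \<lfloor>x\<rfloor> \<ge> 1" using x by linarith
  have "s x \<le> t \<longleftrightarrow> nat \<lfloor>x\<rfloor> - 1 < nn t" unfolding s_def step_fun_def by (rule nn_iff)
  also have "\<dots> \<longleftrightarrow> nat \<lfloor>x\<rfloor> \<le> nn t" using f1 by linarith
  also have "\<dots> \<longleftrightarrow> \<lfloor>x\<rfloor> \<le> int (nn t)" using x by linarith
  also have "\<dots> \<longleftrightarrow> x < real (nn t) + 1" by (simp add: floor_le_iff)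
  finally show ?thesis .
qed

lemma s_nat: "s (real k + 1) = m k"
proof -
  have "\<lfloor>real k + 1\<rfloor> = int k + 1" by linarith
  then have "nat \<lfloor>real k + 1\<rfloor> - 1 = k" by simp
  then show ?thesis unfolding s_def step_fun_def by simp
qed

lemma s_pos: "s x > 0" unfolding s_def step_fun_def using m_pos by simp

lemma s_mono: "x \<le> y \<Longrightarrow> s x \<le> s y"
  unfolding s_def step_fun_def by (intro m_mono) (simp add: floor_mono nat_mono diff_le_mono)

end

lemma H1:
  fixes b D \<mu> l :: real
  assumes b: "b > 0" and D: "D > 0" and \<mu>: "\<mu> \<ge> 0" and l: "l > 0" and h: "D * \<mu> powr b \<le> l"
  shows "\<mu> \<le> D powr (- 1 / b) * l powr (1 / b)"
proof -
  have "\<mu> powr b \<le> l / D" using h D by (simp add: field_simps)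
  then have "(\<mu> powr b) powr (1 / b) \<le> (l / D) powr (1 / b)" using b by (intro powr_mono2) auto
  also have "(\<mu> powr b) powr (1 / b) = \<mu>" using b \<mu> by (simp add: powr_powr)
  also have "(l / D) powr (1 / b) = D powr (- 1 / b) * l powr (1 / b)"
    using l D by (simp add: powr_divide powr_minus_divide divide_simps)
  finally show ?thesis .
qed

lemma H2:
  fixes b D \<mu> l :: real
  assumes b: "b > 0" and D: "D > 0" and \<mu>: "\<mu> \<ge> 0" and l: "l > 0" and h: "l \<le> D * \<mu> powr b"
  shows "D powr (- 1 / b) * l powr (1 / b) \<le> \<mu>"
proof -
  have "l / D \<le> \<mu> powr b" using h D by (simp add: field_simps)
  then have "(l / D) powr (1 / b) \<le> (\<mu> powr b) powr (1 / b)" using b l D by (intro powr_mono2) auto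
  also have "(\<mu> powr b) powr (1 / b) = \<mu>" using b \<mu> by (simp add: powr_powr)
  also have "(l / D) powr (1 / b) = D powr (- 1 / b) * l powr (1 / b)"
    using l D by (simp add: powr_divide powr_minus_divide divide_simps)
  finally show ?thesis .
qed

lemma powr_ge1: "1 \<le> (l::real) \<Longrightarrow> 0 \<le> b \<Longrightarrow> 1 \<le> l powr b"
  using powr_mono[of 0 b l] by simp

lemma Bext:
  fixes f :: "real \<Rightarrow> real"
  assumes pos: "\<And>x. x \<ge> 1 \<Longrightarrow> f x > 0"
    and mono: "\<And>x y. 1 \<le> x \<Longrightarrow> x \<le> y \<Longrightarrow> f x \<le> f y"
    and b: "b > 0" and B: "b \<in> Bset f"
  shows "\<exists>D>0. \<forall>x\<ge>1. \<forall>l\<ge>1. f (l * x) \<ge> D * l powr b * f x"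
proof -
  obtain D x0' where D: "D > 0" and h0: "\<And>x l. x \<ge> x0' \<Longrightarrow> l \<ge> 1 \<Longrightarrow> f (l * x) \<ge> D * l powr b * f x"
    using B unfolding Bset_def by blast
  define x0 where "x0 = max x0' 1"
  have x01: "x0 \<ge> 1" unfolding x0_def by simp
  have h: "\<And>x l. x \<ge> x0 \<Longrightarrow> l \<ge> 1 \<Longrightarrow> f (l * x) \<ge> D * l powr b * f x" using h0 unfolding x0_def by simp
  define D' where "D' = min D 1 * x0 powr (- b)"
  have D'0: "D' > 0" unfolding D'_def using D x01 by simp
  have xb: "x0 powr (- b) \<le> 1" using x01 b by (intro powr_le1_aux) auto
  have "\<forall>x\<ge>1. \<forall>l\<ge>1. f (l * x) \<ge> D' * l powr b * f x"
  proof (intro allI impI)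
    fix x l :: real assume x: "1 \<le> x" and l: "1 \<le> l"
    have fx: "f x > 0" using pos x by simp
    have lx: "x \<le> l * x" using mult_right_mono[OF l] x by simp
    show "D' * l powr b * f x \<le> f (l * x)"
    proof (cases "x \<ge> x0")
      case True
      have "D' * l powr b * f x \<le> D * l powr b * f x" unfolding D'_def using D xb fx l
        by (intro mult_right_mono) (auto intro!: mult_mono simp: min_def)
      also have "\<dots> \<le> f (l * x)" using h True l by simp
      finally show ?thesis .
    next
      case False
      show ?thesis
      proof (cases "l * x \<ge> x0")
        case True
        define \<mu> where "\<mu> = l * x / x0"
        have \<mu>1: "\<mu> \<ge> 1" unfolding \<mu>_def using True x01 by simp
        have "f (l * x) = f (\<mu> * x0)" unfolding \<mu>_def using x01 by simp
        also have "\<dots> \<ge> D * \<mu> powr b * f x0" using h[OF order.refl \<mu>1] .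
        finally have 1: "D * \<mu> powr b * f x0 \<le> f (l * x)" .
        have "\<mu> \<ge> l / x0" unfolding \<mu>_def using x l x01 by (simp add: divide_right_mono)
        then have "(l / x0) powr b \<le> \<mu> powr b" using b l x01 by (intro powr_mono2) auto
        also have "(l / x0) powr b = x0 powr (- b) * l powr b"
          by (subst powr_divide) (use x01 l in \<open>auto simp: powr_minus divide_inverse\<close>)
        finally have 2: "x0 powr (- b) * l powr b \<le> \<mu> powr b" .
        have fxx: "f x \<le> f x0" using False mono[OF x] by simp
        have "min D 1 * (x0 powr (- b) * l powr b) \<le> D * (x0 powr (- b) * l powr b)"
          by (intro mult_right_mono) auto
        then have "D' * l powr b \<le> D * (x0 powr (- b) * l powr b)" unfolding D'_def by (simp add: mult_ac)
        then have "D' * l powr b * f x \<le> D * (x0 powr (- b) * l powr b) * f x"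
          using fx by (intro mult_right_mono) auto
        also have "\<dots> \<le> D * \<mu> powr b * f x0" using 2 fxx D fx
          by (intro mult_mono mult_left_mono) auto
        also have "\<dots> \<le> f (l * x)" by (rule 1)
        finally show ?thesis .
      next
        case False
        have "l * 1 \<le> l * x" using x l by (intro mult_left_mono) auto
        then have "l \<le> x0" using False by simp
        have "l powr b \<le> x0 powr b" using \<open>l \<le> x0\<close> l b by (intro powr_mono2) auto
        then have "x0 powr (- b) * l powr b \<le> 1" using x01 by (simp add: powr_minus field_simps)
        then have "min D 1 * (x0 powr (- b) * l powr b) \<le> 1 * 1" using D
          by (intro mult_mono) auto
        then have "D' * l powr b \<le> 1" unfolding D'_def by (simp add: mult_ac)
        then have "D' * l powr b * f x \<le> 1 * f x" using fx by (intro mult_right_mono) auto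
        also have "\<dots> \<le> f (l * x)" using mono[OF x lx] by simp
        finally show ?thesis .
      qed
    qed
  qed
  then show ?thesis using D'0 by blast
qed

context wseq begin

abbreviation nu where "nu \<equiv> nu_c m"
abbreviation om where "om \<equiv> omega_w M"

lemma s_unb: "\<exists>y\<ge>z. s y > B"
proof -
  obtain j where j: "m j > B" using m_unb by blast
  define y where "y = max z (real j + 1)"
  have "s y \<ge> s (real j + 1)" unfolding y_def by (intro s_mono) simp
  then have "s y > B" using j s_nat[of j] by simp
  moreover have "z \<le> y" unfolding y_def by simp
  ultimately show ?thesis by blast
qed

lemma A1: assumes P: "P_seq M g" shows "g \<in> Bset s"
proof (cases "g \<le> 0")
  case True
  show ?thesis by (rule Bset_nonpos[of 1 s, OF _ _ True]) (auto intro: s_pos s_mono)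
next
  case False
  then have g: "g > 0" by simp
  obtain l c where c: "c \<ge> 1" and lb: "\<And>p. m p / c \<le> l p \<and> l p \<le> c * m p"
    and lm: "mono (\<lambda>p. l p / (real p + 1) powr g)"
    using P unfolding P_seq_def by blast
  define D where "D = 1 / (c * c * 2 powr g)"
  have D0: "D > 0" unfolding D_def using c by simp
  have "\<forall>x\<ge>1. \<forall>lam\<ge>1. s (lam * x) \<ge> D * lam powr g * s x"
  proof (intro allI impI)
    fix x lam :: real assume x: "1 \<le> x" and lam: "1 \<le> lam"
    define p where "p = nat \<lfloor>x\<rfloor> - 1"
    define q where "q = nat \<lfloor>lam * x\<rfloor> - 1"
    have lx: "x \<le> lam * x" using mult_right_mono[OF lam] x by simp
    have P1: "real p + 1 = of_int \<lfloor>x\<rfloor>" unfolding p_def using x by linarith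
    have Q1: "real q + 1 = of_int \<lfloor>lam * x\<rfloor>" unfolding q_def using x lx by linarith
    have pq: "p \<le> q" unfolding p_def q_def using lx by (intro diff_le_mono nat_mono floor_mono)
    have sx: "s x = m p" unfolding s_def step_fun_def p_def ..
    have slx: "s (lam * x) = m q" unfolding s_def step_fun_def q_def ..
    have P1x: "real p + 1 \<le> x" using P1 by linarith
    have Q1x: "lam * x / 2 \<le> real q + 1" using Q1 x lx by linarith
    have pp: "real p + 1 > 0" by simp
    have qp: "real q + 1 > 0" by simp
    have r: "l p / (real p + 1) powr g \<le> l q / (real q + 1) powr g" using lm pq by (simp add: mono_def)
    have mp: "m p > 0" using m_pos .
    have "m p / c \<le> l p" using lb by blast
    then have "m p / c / (real p + 1) powr g \<le> l q / (real q + 1) powr g"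
    proof -
      have "m p / c / (real p + 1) powr g \<le> l p / (real p + 1) powr g"
        using \<open>m p / c \<le> l p\<close> by (intro divide_right_mono) auto
      then show ?thesis using r by linarith
    qed
    then have "m p / c / (real p + 1) powr g * (real q + 1) powr g \<le> l q"
      using qp by (simp add: field_simps)
    also have "l q \<le> c * m q" using lb by blast
    finally have 1: "m p * ((real q + 1) powr g / (real p + 1) powr g) \<le> c * c * m q"
      using c by (simp add: field_simps)
    have "(lam / 2) powr g \<le> ((real q + 1) / (real p + 1)) powr g"
    proof (intro powr_mono2)
      show "0 \<le> g" using g by simp
      show "0 \<le> lam / 2" using lam by simp
      have "lam / 2 = (lam * x / 2) / x" using x by simp
      also have "\<dots> \<le> (real q + 1) / x" using Q1x x by (intro divide_right_mono) auto
      also have "\<dots> \<le> (real q + 1) / (real p + 1)" using P1x pp by (intro divide_left_mono) auto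
      finally show "lam / 2 \<le> (real q + 1) / (real p + 1)" .
    qed
    also have "((real q + 1) / (real p + 1)) powr g = (real q + 1) powr g / (real p + 1) powr g"
      by (simp add: powr_divide)
    finally have 2: "lam powr g / 2 powr g \<le> (real q + 1) powr g / (real p + 1) powr g"
      using lam by (simp add: powr_divide)
    have "D * lam powr g * s x = (lam powr g / 2 powr g) * m p / (c * c)"
      unfolding D_def sx by simp
    also have "\<dots> \<le> ((real q + 1) powr g / (real p + 1) powr g) * m p / (c * c)"
      using 2 mp c by (intro divide_right_mono mult_right_mono) auto
    also have "\<dots> \<le> m q" using 1 c by (simp add: field_simps)
    finally show "s (lam * x) \<ge> D * lam powr g * s x" unfolding slx .
  qed
  then show ?thesis unfolding Bset_def using D0 by blast
qed

lemma A2: assumes B: "b \<in> Bset s" shows "P_seq M b"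
proof (cases "b \<le> 0")
  case True
  have "mono (\<lambda>p. m p / (real p + 1) powr b)"
  proof (rule monoI)
    fix p q :: nat assume pq: "p \<le> q"
    have "(real q + 1) powr b \<le> (real p + 1) powr b" using pq True by (intro powr_mono2') auto
    then show "m p / (real p + 1) powr b \<le> m q / (real q + 1) powr b"
      using m_mono[OF pq] m_pos[of p] by (intro frac_le) auto
  qed
  then show ?thesis unfolding P_seq_def using m_pos
    by (intro exI[of _ m] exI[of _ "1::real"]) auto
next
  case False
  then have b: "b > 0" by simp
  obtain D where D: "D > 0" and h: "\<And>x l. x \<ge> 1 \<Longrightarrow> l \<ge> 1 \<Longrightarrow> s (l * x) \<ge> D * l powr b * s x"
    using Bext[of s, OF s_pos s_mono b B] by blast
  define r where "r p = m p / (real p + 1) powr b" for p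
  have rpos: "r p > 0" for p unfolding r_def using m_pos by simp
  have rq: "D * r p \<le> r q" if pq: "p \<le> q" for p q
  proof -
    define lam where "lam = (real q + 1) / (real p + 1)"
    have lam: "lam \<ge> 1" unfolding lam_def using pq by simp
    have "s (lam * (real p + 1)) \<ge> D * lam powr b * s (real p + 1)" using h lam by simp
    then have "m q \<ge> D * lam powr b * m p" unfolding lam_def using s_nat by simp
    moreover have "lam powr b = (real q + 1) powr b / (real p + 1) powr b" unfolding lam_def by (simp add: powr_divide)
    ultimately have "m q \<ge> D * ((real q + 1) powr b / (real p + 1) powr b) * m p" by simp
    then show ?thesis unfolding r_def by (simp add: field_simps)
  qed
  define I where "I p = Inf (r ` {p..})" for p
  have bdd: "bdd_below (r ` {p..})" for p using rpos by (intro bdd_belowI[of _ 0]) (auto intro: less_imp_le)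
  have I_le: "I p \<le> r p" for p unfolding I_def using bdd by (intro cInf_lower) auto
  have I_ge: "D * r p \<le> I p" for p unfolding I_def using rq by (intro cINF_greatest) auto
  have I_mono: "mono I"
  proof (rule monoI)
    fix p q :: nat assume "p \<le> q"
    then show "I p \<le> I q" unfolding I_def using bdd by (intro cInf_superset_mono) auto
  qed
  define l where "l p = (real p + 1) powr b * I p" for p
  define c where "c = max 1 (1 / D)"
  have c1: "c \<ge> 1" unfolding c_def by simp
  have lI: "l p / (real p + 1) powr b = I p" for p unfolding l_def by simp
  have "m p / c \<le> l p \<and> l p \<le> c * m p" for p
  proof
    have pb: "(real p + 1) powr b > 0" by simp
    have mr: "m p = (real p + 1) powr b * r p" unfolding r_def using pb by simp
    have "m p / c \<le> D * m p"
    proof -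
      have "1 / c \<le> D" unfolding c_def using D by (simp add: field_simps min_def max_def)
      then have "m p * (1 / c) \<le> m p * D" using m_pos[of p] by (intro mult_left_mono) auto
      then show ?thesis by (simp add: mult.commute)
    qed
    also have "D * m p = (real p + 1) powr b * (D * r p)" unfolding mr by simp
    also have "\<dots> \<le> l p" unfolding l_def using I_ge pb by (intro mult_left_mono) auto
    finally show "m p / c \<le> l p" .
    have "l p \<le> (real p + 1) powr b * r p" unfolding l_def using I_le pb by (intro mult_left_mono) auto
    also have "\<dots> = m p" using mr by simp
    also have "\<dots> \<le> c * m p" using c1 m_pos[of p] by simp
    finally show "l p \<le> c * m p" .
  qed
  moreover have "mono (\<lambda>p. l p / (real p + 1) powr b)" unfolding lI using I_mono by simp
  ultimately show ?thesis unfolding P_seq_def using c1 by blast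
qed

lemma A: "gamma_seq M = Sup (ereal ` Bset s)"
proof -
  have "{g. P_seq M g} = Bset s" using A1 A2 by blast
  then show ?thesis unfolding gamma_seq_def by (simp add: setcompr_eq_image)
qed

end

context wseq begin

lemma nu_pos: "t \<ge> m 0 \<Longrightarrow> nu t > 0"
  using nn_ge[of 0 t] unfolding nu_eq by simp

lemma nu_mono: "t \<le> t' \<Longrightarrow> nu t \<le> nu t'"
  using nn_mono unfolding nu_eq by simp

lemma nu_unb: "\<exists>y\<ge>z. nu y > B"
proof -
  obtain k :: nat where k: "real k > B" using reals_Archimedean2 by blast
  define y where "y = max z (m k)"
  have "nn y \<ge> Suc k" unfolding y_def by (intro nn_ge) simp
  then have "nu y > B" using k unfolding nu_eq by simp
  moreover have "z \<le> y" unfolding y_def by simp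
  ultimately show ?thesis by blast
qed

lemma s_Aset_pos: "Aset s \<subseteq> {0<..}"
  by (rule Aset_pos[of 0 s]) (auto intro: s_pos s_mono s_unb)

lemma nu_Aset_pos: "Aset nu \<subseteq> {0<..}"
  by (rule Aset_pos[of "m 0" nu]) (auto intro: nu_pos nu_mono nu_unb)

lemma nat_ceil_ge: "x0 \<le> real (nat \<lceil>x0\<rceil>)"
  by linarith

lemma B1: assumes b: "b > 0" and B: "b \<in> Bset s" shows "1 / b \<in> Aset nu"
proof -
  obtain D x0 where D: "D > 0" and h: "\<And>x l. x \<ge> x0 \<Longrightarrow> l \<ge> 1 \<Longrightarrow> s (l * x) \<ge> D * l powr b * s x"
    using B unfolding Bset_def by blast
  define N where "N = nat \<lceil>x0\<rceil>"
  define C where "C = max 1 (2 * D powr (- 1 / b))"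
  have C1: "C \<ge> 1" unfolding C_def by simp
  have "\<forall>t\<ge>m N. \<forall>l\<ge>1. nu (l * t) \<le> C * l powr (1 / b) * nu t"
  proof (intro allI impI)
    fix t l :: real assume t: "m N \<le> t" and l: "1 \<le> l"
    define n where "n = nn t"
    define Nn where "Nn = nn (l * t)"
    have tp: "t > 0" using t m_pos[of N] by simp
    have n1: "n \<ge> Suc N" unfolding n_def using t by (rule nn_ge)
    have xn: "real n + 1 \<ge> x0" using n1 nat_ceil_ge[of x0] unfolding N_def by linarith
    have lt: "t \<le> l * t" using mult_right_mono[OF l] tp by simp
    have nN: "n \<le> Nn" unfolding n_def Nn_def using lt by (rule nn_mono)
    have lb: "l powr (1 / b) \<ge> 1" using l b by (intro powr_ge1) auto
    have Cl: "C * l powr (1 / b) \<ge> 1" using C1 lb by (metis mult_mono' mult_1 zero_le_one order.trans)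
    show "nu (l * t) \<le> C * l powr (1 / b) * nu t"
    proof (cases "Nn \<le> n")
      case True
      have "nu (l * t) \<le> 1 * real n" unfolding nu_eq Nn_def[symmetric] using True by simp
      also have "\<dots> \<le> C * l powr (1 / b) * real n" using Cl by (intro mult_right_mono) auto
      finally show ?thesis unfolding nu_eq n_def .
    next
      case False
      have Nn1: "real Nn \<ge> 1" using False by simp
      have sN: "s (real Nn) \<le> l * t" using s_iff[OF Nn1] unfolding Nn_def by simp
      have sn: "\<not> s (real n + 1) \<le> t" using s_iff[of "real n + 1" t] unfolding n_def by simp
      define \<mu> where "\<mu> = real Nn / (real n + 1)"
      have \<mu>1: "\<mu> \<ge> 1" unfolding \<mu>_def using False by simp
      have \<mu>n: "\<mu> * (real n + 1) = real Nn" unfolding \<mu>_def by simp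
      have "s (\<mu> * (real n + 1)) \<ge> D * \<mu> powr b * s (real n + 1)" using h xn \<mu>1 by simp
      then have hs: "s (real Nn) \<ge> D * \<mu> powr b * s (real n + 1)" unfolding \<mu>n .
      have Dm: "D * \<mu> powr b > 0" using D \<mu>1 by simp
      have "D * \<mu> powr b * t \<le> D * \<mu> powr b * s (real n + 1)" using sn Dm by (intro mult_left_mono) auto
      also have "\<dots> \<le> l * t" using hs sN by linarith
      finally have "D * \<mu> powr b \<le> l" using tp by simp
      then have \<mu>le: "\<mu> \<le> D powr (- 1 / b) * l powr (1 / b)" using b D \<mu>1 l by (intro H1) auto
      have "real Nn = \<mu> * (real n + 1)" using \<mu>n by simp
      also have "\<dots> \<le> (D powr (- 1 / b) * l powr (1 / b)) * (2 * real n)"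
        using \<mu>le \<mu>1 n1 by (intro mult_mono) auto
      also have "\<dots> = (2 * D powr (- 1 / b)) * l powr (1 / b) * real n" by simp
      also have "\<dots> \<le> C * l powr (1 / b) * real n" unfolding C_def by (intro mult_right_mono) auto
      finally show ?thesis unfolding nu_eq n_def Nn_def .
    qed
  qed
  moreover have "C > 0" using C1 by simp
  ultimately show ?thesis unfolding Aset_def by blast
qed

lemma B2: assumes a: "a \<in> Aset nu" shows "1 / a \<in> Bset s"
proof -
  have a0: "a > 0" using nu_Aset_pos a by auto
  obtain C t0 where C: "C > 0" and h: "\<And>t l. t \<ge> t0 \<Longrightarrow> l \<ge> 1 \<Longrightarrow> nu (l * t) \<le> C * l powr a * nu t"
    using a unfolding Aset_def by blast
  obtain N where N: "m N > 2 * max t0 1" using m_unb by blast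
  define D where "D = min (4 powr (- 1 / a)) ((2 * C) powr (- 1 / a) / 2)"
  have D0: "D > 0" unfolding D_def using C by simp
  have "\<forall>x\<ge>real N + 1. \<forall>l\<ge>1. s (l * x) \<ge> D * l powr (1 / a) * s x"
  proof (intro allI impI)
    fix x l :: real assume x: "real N + 1 \<le> x" and l: "1 \<le> l"
    have x1: "x \<ge> 1" using x by simp
    have sx: "s x \<ge> m N" using s_mono[OF x] s_nat[of N] by simp
    have lx: "x \<le> l * x" using mult_right_mono[OF l] x1 by simp
    have sxlx: "s x \<le> s (l * x)" using lx by (rule s_mono)
    show "D * l powr (1 / a) * s x \<le> s (l * x)"
    proof (cases "l < 4")
      case True
      have "l powr (1 / a) \<le> 4 powr (1 / a)" using True l a0 by (intro powr_mono2) auto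
      then have "4 powr (- 1 / a) * l powr (1 / a) \<le> 4 powr (- 1 / a) * 4 powr (1 / a)"
        by (intro mult_left_mono) auto
      also have "\<dots> = 1" by (simp add: powr_add[symmetric])
      finally have "D * l powr (1 / a) \<le> 1" unfolding D_def
        by (meson min.cobounded1 mult_right_mono order.trans powr_ge_zero)
      then have "D * l powr (1 / a) * s x \<le> 1 * s x" using s_pos[of x] by (intro mult_right_mono) auto
      then show ?thesis using sxlx by simp
    next
      case False
      then have l4: "l \<ge> 4" by simp
      define t where "t = s x / 2"
      have tt0: "t \<ge> t0" and t1: "t \<ge> 1" unfolding t_def using sx N by auto
      have tp: "t > 0" using t1 by simp
      have "\<not> s x \<le> t" unfolding t_def using s_pos[of x] by simp
      then have ntx: "real (nn t) < x" using s_iff[OF x1, of t] by simp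
      define T where "T = s (l * x)"
      have lx1: "l * x \<ge> 4" using l4 x1 by (metis mult_mono' mult_1_right order.trans zero_le_numeral one_le_numeral le_numeral_extra(1) less_imp_le zero_less_one linorder_le_less_linear)
      have "l * x < real (nn T) + 1" using s_iff[of "l * x" T] lx1 unfolding T_def by simp
      then have nT: "real (nn T) > l * x / 2" using lx1 by simp
      have Tt: "T \<ge> t"
      proof (rule ccontr)
        assume "\<not> T \<ge> t"
        then have "nn T \<le> nn t" using nn_mono by simp
        moreover have "l * x / 2 \<ge> x" using l4 x1 by (simp add: field_simps)
        ultimately show False using nT ntx by linarith
      qed
      define \<mu> where "\<mu> = T / t"
      have \<mu>1: "\<mu> \<ge> 1" unfolding \<mu>_def using Tt tp by simp
      have T\<mu>: "T = \<mu> * t" unfolding \<mu>_def using tp by simp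
      have "nu T \<le> C * \<mu> powr a * nu t" unfolding T\<mu> using h tt0 \<mu>1 by simp
      also have "\<dots> \<le> C * \<mu> powr a * x" unfolding nu_eq using ntx C by (intro mult_left_mono) auto
      finally have "l * x / 2 < C * \<mu> powr a * x" using nT unfolding nu_eq by simp
      then have "l < 2 * C * \<mu> powr a" using x1 by (simp add: field_simps)
      then have "(2 * C) powr (- 1 / a) * l powr (1 / a) \<le> \<mu>" using a0 C \<mu>1 l by (intro H2) auto
      then have "(2 * C) powr (- 1 / a) * l powr (1 / a) * (s x / 2) \<le> \<mu> * t"
        unfolding t_def using s_pos[of x] by (intro mult_right_mono) auto
      then have "((2 * C) powr (- 1 / a) / 2) * l powr (1 / a) * s x \<le> T" unfolding T\<mu> by simp
      moreover have "D * l powr (1 / a) * s x \<le> ((2 * C) powr (- 1 / a) / 2) * l powr (1 / a) * s x"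
        unfolding D_def using s_pos[of x] by (intro mult_right_mono) auto
      ultimately show ?thesis unfolding T_def by linarith
    qed
  qed
  then show ?thesis unfolding Bset_def using D0 by blast
qed

lemma E1: assumes a: "a \<in> Aset s" shows "1 / a \<in> Bset nu"
proof -
  have a0: "a > 0" using s_Aset_pos a by auto
  obtain C x0 where C: "C > 0" and h: "\<And>x l. x \<ge> x0 \<Longrightarrow> l \<ge> 1 \<Longrightarrow> s (l * x) \<le> C * l powr a * s x"
    using a unfolding Aset_def by blast
  define N where "N = nat \<lceil>x0\<rceil>"
  define Dd where "Dd = C powr (- 1 / a) / 2"
  have Dd0: "Dd > 0" unfolding Dd_def using C by simp
  have "\<forall>t\<ge>m N. \<forall>l\<ge>1. nu (l * t) \<ge> Dd * l powr (1 / a) * nu t"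
  proof (intro allI impI)
    fix t l :: real assume t: "m N \<le> t" and l: "1 \<le> l"
    define n where "n = nn t"
    define Nn where "Nn = nn (l * t)"
    have tp: "t > 0" using t m_pos[of N] by simp
    have n1: "n \<ge> Suc N" unfolding n_def using t by (rule nn_ge)
    have xn: "real n \<ge> x0" using n1 nat_ceil_ge[of x0] unfolding N_def by linarith
    have n1': "real n \<ge> 1" using n1 by simp
    have lt: "t \<le> l * t" using mult_right_mono[OF l] tp by simp
    have nN: "n \<le> Nn" unfolding n_def Nn_def using lt by (rule nn_mono)
    have sn: "s (real n) \<le> t" using s_iff[OF n1', of t] unfolding n_def by simp
    have sN: "\<not> s (real Nn + 1) \<le> l * t" using s_iff[of "real Nn + 1" "l * t"] unfolding Nn_def by simp
    define \<mu> where "\<mu> = (real Nn + 1) / real n"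
    have \<mu>1: "\<mu> \<ge> 1" unfolding \<mu>_def using nN n1' by simp
    have \<mu>n: "\<mu> * real n = real Nn + 1" unfolding \<mu>_def using n1' by simp
    have "s (\<mu> * real n) \<le> C * \<mu> powr a * s (real n)" using h xn \<mu>1 by simp
    also have "\<dots> \<le> C * \<mu> powr a * t" using sn C by (intro mult_left_mono) auto
    finally have "l * t < C * \<mu> powr a * t" using sN unfolding \<mu>n by simp
    then have "l \<le> C * \<mu> powr a" using tp by simp
    then have \<mu>ge: "C powr (- 1 / a) * l powr (1 / a) \<le> \<mu>" using a0 C \<mu>1 l by (intro H2) auto
    have "C powr (- 1 / a) * l powr (1 / a) * real n \<le> real Nn + 1"
      using mult_right_mono[OF \<mu>ge, of "real n"] \<mu>n by simp
    moreover have "real Nn \<ge> 1" using nN n1 by simp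
    ultimately have "Dd * l powr (1 / a) * real n \<le> real Nn" unfolding Dd_def by simp
    then show "nu (l * t) \<ge> Dd * l powr (1 / a) * nu t" unfolding nu_eq n_def Nn_def .
  qed
  then show ?thesis unfolding Bset_def using Dd0 by blast
qed

lemma E2: assumes b: "b > 0" and B: "b \<in> Bset nu" shows "1 / b \<in> Aset s"
proof -
  obtain D t0 where D: "D > 0" and h: "\<And>t l. t \<ge> t0 \<Longrightarrow> l \<ge> 1 \<Longrightarrow> nu (l * t) \<ge> D * l powr b * nu t"
    using B unfolding Bset_def by blast
  obtain N where N: "m N > max t0 1" using m_unb by blast
  define C where "C = max 2 (2 * (D / 2) powr (- 1 / b))"
  have C2: "C \<ge> 2" unfolding C_def by simp
  have "\<forall>x\<ge>real N + 1. \<forall>l\<ge>1. s (l * x) \<le> C * l powr (1 / b) * s x"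
  proof (intro allI impI)
    fix x l :: real assume x: "real N + 1 \<le> x" and l: "1 \<le> l"
    have x1: "x \<ge> 1" using x by simp
    define t where "t = s x"
    have tt: "t \<ge> m N" unfolding t_def using s_mono[OF x] s_nat[of N] by simp
    have tt0: "t \<ge> t0" and tp: "t > 0" using tt N by auto
    have "x < real (nn t) + 1" using s_iff[OF x1, of t] unfolding t_def by simp
    moreover have "0 < nn t" using calculation x1 by simp
    ultimately have nt: "real (nn t) > x / 2" by linarith
    have lx: "x \<le> l * x" using mult_right_mono[OF l] x1 by simp
    have lx1: "l * x \<ge> 1" using lx x1 by linarith
    define T where "T = s (l * x)"
    have Tp: "T > 0" unfolding T_def by (rule s_pos)
    have "\<not> s (l * x) \<le> T / 2" using Tp unfolding T_def by simp
    then have nT: "real (nn (T / 2)) < l * x" using s_iff[OF lx1, of "T / 2"] by simp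
    have lb: "l powr (1 / b) \<ge> 1" using l b by (intro powr_ge1) auto
    show "s (l * x) \<le> C * l powr (1 / b) * s x"
    proof (cases "T / 2 \<le> t")
      case True
      have "T \<le> 2 * t" using True by simp
      also have "\<dots> \<le> C * l powr (1 / b) * t" using C2 lb tp
        by (intro mult_right_mono) (auto simp: mult_mono' order.trans)
      finally show ?thesis unfolding T_def t_def .
    next
      case False
      define \<mu> where "\<mu> = (T / 2) / t"
      have \<mu>1: "\<mu> \<ge> 1" unfolding \<mu>_def using False tp by simp
      have T\<mu>: "T / 2 = \<mu> * t" unfolding \<mu>_def using tp by simp
      have "D * \<mu> powr b * nu t \<le> nu (T / 2)" unfolding T\<mu> using h tt0 \<mu>1 by simp
      moreover have "D * \<mu> powr b * (x / 2) \<le> D * \<mu> powr b * nu t"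
        using nt D unfolding nu_eq by (intro mult_left_mono) auto
      ultimately have "D * \<mu> powr b * (x / 2) < l * x" using nT unfolding nu_eq by linarith
      then have "(D / 2) * \<mu> powr b \<le> l" using x1 by (simp add: field_simps)
      then have \<mu>le: "\<mu> \<le> (D / 2) powr (- 1 / b) * l powr (1 / b)" using b D \<mu>1 l by (intro H1) auto
      have "T = 2 * \<mu> * t" using T\<mu> by simp
      also have "\<dots> \<le> 2 * ((D / 2) powr (- 1 / b) * l powr (1 / b)) * t"
        using \<mu>le tp by (intro mult_right_mono mult_left_mono) auto
      also have "\<dots> = (2 * (D / 2) powr (- 1 / b)) * l powr (1 / b) * t" by simp
      also have "\<dots> \<le> C * l powr (1 / b) * t" unfolding C_def using tp by (intro mult_right_mono) auto
      finally show ?thesis unfolding T_def t_def .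
    qed
  qed
  moreover have "C > 0" using C2 by simp
  ultimately show ?thesis unfolding Aset_def by blast
qed

end

context wseq begin

lemma om_pos: "t \<ge> 2 * m 0 \<Longrightarrow> om t > 0"
proof -
  assume t: "t \<ge> 2 * m 0"
  have m0: "m 0 > 0" by (rule m_pos)
  have tp: "t > 0" using t m0 by simp
  have "ln t > ln (m 0)" using t m0 tp by (subst ln_less_cancel_iff) auto
  moreover have "ln t - ln (m 0) \<le> om t" using tp by (rule omega_w5)
  ultimately show ?thesis by linarith
qed

lemma om_mono2: "2 * m 0 \<le> t \<Longrightarrow> t \<le> t' \<Longrightarrow> om t \<le> om t'"
  using omega_mono m_pos[of 0] by simp

lemma om_unb: "\<exists>y\<ge>z. om y > B"
proof -
  define y where "y = max z (m 0 * exp (B + 1))"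
  have m0: "m 0 > 0" by (rule m_pos)
  have yp: "y \<ge> m 0 * exp (B + 1)" unfolding y_def by simp
  then have y0: "y > 0" using m0 by (smt (verit) exp_gt_zero mult_pos_pos)
  have "ln y \<ge> ln (m 0 * exp (B + 1))" using yp m0 y0 by (subst ln_le_cancel_iff) auto
  also have "ln (m 0 * exp (B + 1)) = ln (m 0) + B + 1" using m0 by (simp add: ln_mult)
  finally have "om y > B" using omega_w5[OF y0] by simp
  moreover have "z \<le> y" unfolding y_def by simp
  ultimately show ?thesis by blast
qed

lemma om_Aset_pos: "Aset om \<subseteq> {0<..}"
  by (rule Aset_pos[of "2 * m 0" om]) (auto intro: om_pos om_mono2 om_unb)

lemma exp_powr: "exp (x::real) powr a = exp (a * x)"
  by (simp add: powr_def)

lemma C_incl: assumes a: "a \<in> Aset nu" shows "a \<in> Aset om"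
proof -
  have a0: "a > 0" using nu_Aset_pos a by auto
  obtain C t0 where C: "C > 0" and h: "\<And>t l. t \<ge> t0 \<Longrightarrow> l \<ge> 1 \<Longrightarrow> nu (l * t) \<le> C * l powr a * nu t"
    using a unfolding Aset_def by blast
  define t1 where "t1 = max t0 1"
  define Q where "Q = C * exp (2 * a) / (exp a - 1)"
  have ea: "exp a > 1" using a0 by simp
  have Q0: "Q > 0" unfolding Q_def using C ea by simp
  have QC: "Q * (exp a - 1) = C * exp (2 * a)" unfolding Q_def using ea by simp
  have main: "om (l * t) \<le> ((1 + Q) * exp a) * l powr a * om t" if t: "t \<ge> exp 1 * t1" and l: "l \<ge> 1" for t l
  proof -
    have t1p: "t1 \<ge> 1" unfolding t1_def by simp
    have tp: "t > 0" using t t1p by (smt (verit) exp_gt_zero mult_pos_pos)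
    define te where "te = t / exp 1"
    have te: "te \<ge> t1" unfolding te_def using t by (simp add: field_simps)
    have tep: "te > 0" using te t1p by simp
    have tte: "t = exp 1 * te" unfolding te_def by simp
    have nute: "nu te \<le> om t"
      using omega_w2[OF tep] omega_nonneg[OF tep] unfolding tte nu_eq by simp
    have nu0: "nu te \<ge> 0" unfolding nu_eq by simp
    have iter: "om (exp (real n) * t) \<le> om t + Q * (exp (a * real n) - 1) * nu te" for n
    proof (induction n)
      case 0 then show ?case by simp
    next
      case (Suc n)
      have ep: "exp (real n) * t > 0" using tp by simp
      have e1: "exp (real (Suc n)) * t = exp 1 * (exp (real n) * t)" by (simp add: exp_add[symmetric] algebra_simps)
      have "om (exp (real (Suc n)) * t) \<le> real (nn (exp 1 * (exp (real n) * t))) * ln (exp 1) + om (exp (real n) * t)"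
        unfolding e1 using ep by (intro omega_w3) auto
      also have "exp 1 * (exp (real n) * t) = exp (real n + 2) * te"
        unfolding tte by (simp add: exp_add[symmetric] algebra_simps numeral_2_eq_2)
      finally have 1: "om (exp (real (Suc n)) * t) \<le> nu (exp (real n + 2) * te) + om (exp (real n) * t)"
        unfolding nu_eq by simp
      have "nu (exp (real n + 2) * te) \<le> C * exp (real n + 2) powr a * nu te"
        using te unfolding t1_def by (intro h) auto
      also have "exp (real n + 2) powr a = exp (a * real n) * exp (2 * a)"
        by (simp add: exp_powr exp_add[symmetric] algebra_simps)
      finally have 2: "nu (exp (real n + 2) * te) \<le> C * exp (2 * a) * exp (a * real n) * nu te" by (simp add: mult_ac)
      have 3: "Q * (exp (a * real (Suc n)) - 1) = Q * (exp (a * real n) - 1) + C * exp (2 * a) * exp (a * real n)"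
      proof -
        have "exp (a * real (Suc n)) = exp (a * real n) * exp a" by (simp add: exp_add[symmetric] algebra_simps)
        then have "Q * (exp (a * real (Suc n)) - 1) = Q * (exp (a * real n) - 1) + exp (a * real n) * (Q * (exp a - 1))"
          by (simp add: algebra_simps)
        then show ?thesis unfolding QC by (simp add: mult_ac)
      qed
      show ?case using 1 2 Suc.IH unfolding 3 by (simp add: algebra_simps)
    qed
    have omt0: "om t \<ge> 0" using omega_nonneg[OF tp] .
    have bound: "om (exp (real n) * t) \<le> ((1 + Q) * exp (a * real n)) * om t" for n
    proof -
      have en: "exp (a * real n) \<ge> 1" using a0 by simp
      have "Q * (exp (a * real n) - 1) * nu te \<le> Q * exp (a * real n) * om t"
        using nute nu0 Q0 en by (intro mult_mono) auto
      then have "om (exp (real n) * t) \<le> om t + Q * exp (a * real n) * om t" using iter[of n] by simp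
      also have "\<dots> \<le> exp (a * real n) * om t + Q * exp (a * real n) * om t"
        using en omt0 by (simp add: mult_right_mono[of 1 "exp (a * real n)" "om t", simplified])
      finally show ?thesis by (simp add: algebra_simps)
    qed
    define n where "n = nat \<lceil>ln l / 1\<rceil>"
    have n1: "ln l \<le> real n * 1" and n2: "real n * 1 < ln l + 1"
      using ceil_log_bounds[of 1 l] l unfolding n_def by auto
    have le: "l \<le> exp (real n)" using n1 l by (metis exp_ln exp_le_cancel_iff less_le_trans zero_less_one mult_1_right)
    have "om (l * t) \<le> om (exp (real n) * t)"
      using le tp l by (intro omega_mono) (auto intro: mult_pos_pos mult_right_mono)
    also have "\<dots> \<le> ((1 + Q) * exp (a * real n)) * om t" by (rule bound)
    also have "exp (a * real n) \<le> exp a * l powr a"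
    proof -
      have "a * real n \<le> a * (ln l + 1)" using n2 a0 by (intro mult_left_mono) auto
      then have "exp (a * real n) \<le> exp (a * (ln l + 1))" by simp
      also have "\<dots> = exp a * l powr a" using l by (simp add: powr_def exp_add[symmetric] algebra_simps)
      finally show ?thesis .
    qed
    then have "((1 + Q) * exp (a * real n)) * om t \<le> ((1 + Q) * (exp a * l powr a)) * om t"
      using Q0 omt0 by (intro mult_right_mono mult_left_mono) auto
    finally show ?thesis by (simp add: mult_ac)
  qed
  have "(1 + Q) * exp a > 0" using Q0 by simp
  then show ?thesis unfolding Aset_def using main by blast
qed

end

context wseq begin

lemma nu_le_om: "t > 0 \<Longrightarrow> nu t \<le> om (exp 1 * t)"
  using omega_w2[of t] omega_nonneg[of t] unfolding nu_eq by simp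

lemma om_step: "v > 0 \<Longrightarrow> om (exp 1 * v) \<le> nu (exp 1 * v) + om v"
  using omega_w3[of "exp 1" v] unfolding nu_eq by simp

lemma F1: assumes b: "b > 0" and B: "b \<in> Bset nu" shows "b \<in> Bset om"
proof -
  obtain D t0 where D: "D > 0" and h: "\<And>t l. t \<ge> t0 \<Longrightarrow> l \<ge> 1 \<Longrightarrow> nu (l * t) \<ge> D * l powr b * nu t"
    using B unfolding Bset_def by blast
  define t1 where "t1 = max t0 1"
  have t11: "t1 \<ge> 1" unfolding t1_def by simp
  have e1: "exp (1::real) \<ge> 1" by simp
  have step: "om (exp 1 * l * (exp (real n) * v)) - om (exp 1 * l * v) \<ge> D * l powr b * (om (exp (real n) * v) - om v)"
    if v: "v \<ge> t1" and l: "l \<ge> 1" for v l n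
  proof (induction n)
    case 0 then show ?case by simp
  next
    case (Suc n)
    have vp: "v > 0" using v t11 by simp
    have en: "exp (real (Suc n)) = exp 1 * exp (real n)" by (simp add: exp_add[symmetric] algebra_simps)
    define u where "u = l * (exp (real (Suc n)) * v)"
    have up: "u > 0" unfolding u_def using l vp by simp
    have u1: "exp 1 * l * (exp (real n) * v) = u" unfolding u_def en by (simp add: mult_ac)
    have u2: "exp 1 * l * (exp (real (Suc n)) * v) = exp 1 * u" unfolding u_def by (simp add: mult_ac)
    have "om (exp 1 * u) - om u \<ge> nu u" using omega_w2[OF up] unfolding nu_eq by simp
    moreover have "nu u \<ge> D * l powr b * nu (exp (real (Suc n)) * v)"
    proof -
      have "exp (real (Suc n)) * v \<ge> t0"
      proof -
        have "1 * v \<le> exp (real (Suc n)) * v" using vp by (intro mult_right_mono) auto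
        moreover have "t0 \<le> v" using v unfolding t1_def by simp
        ultimately show ?thesis by linarith
      qed
      then show ?thesis unfolding u_def using l by (intro h) auto
    qed
    moreover have "nu (exp (real (Suc n)) * v) \<ge> om (exp (real (Suc n)) * v) - om (exp (real n) * v)"
      using om_step[of "exp (real n) * v"] vp unfolding en by (simp add: mult_ac)
    ultimately have "om (exp 1 * u) - om u \<ge> D * l powr b * (om (exp (real (Suc n)) * v) - om (exp (real n) * v))"
      using D by (smt (verit) mult_left_mono powr_ge_zero mult_nonneg_nonneg)
    then show ?case using Suc.IH unfolding u1 u2 by (simp add: algebra_simps)
  qed
  define W where "W = om (exp 1 * t1)"
  have W0: "W \<ge> 0" unfolding W_def using t11 by (intro omega_nonneg) simp
  define t2 where "t2 = max (exp 1 * t1) (m 0 * exp (2 * W))"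
  have main: "om (exp 1 * l * t) \<ge> (D / 2) * l powr b * om t" if t: "t \<ge> t2" and l: "l \<ge> 1" for t l
  proof -
    have m0: "m 0 > 0" by (rule m_pos)
    have tt1: "t \<ge> exp 1 * t1" using t unfolding t2_def by simp
    have tp: "t > 0" using tt1 t11 by (smt (verit) exp_gt_zero mult_pos_pos)
    have "ln t \<ge> ln (m 0 * exp (2 * W))"
      using t m0 tp unfolding t2_def by (subst ln_le_cancel_iff) auto
    then have "ln t - ln (m 0) \<ge> 2 * W" using m0 by (simp add: ln_mult)
    then have omW: "om t \<ge> 2 * W" using omega_w5[OF tp] by simp
    define n where "n = nat \<lfloor>ln (t / t1) / 1\<rfloor>"
    have "t1 * 1 \<le> t1 * exp 1" using t11 by (intro mult_left_mono) auto
    then have "t1 \<le> t" using tt1 by (simp add: mult.commute)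
    then have q1: "t / t1 \<ge> 1" using t11 by (simp add: le_divide_eq)
    have n1: "real n * 1 \<le> ln (t / t1)" and n2: "ln (t / t1) < (real n + 1) * 1"
      using floor_log_bounds[of 1 "t / t1"] q1 unfolding n_def by auto
    define v where "v = t / exp (real n)"
    have tv: "t = exp (real n) * v" unfolding v_def by simp
    have "exp (real n) \<le> t / t1" using n1 q1 by (metis exp_le_cancel_iff exp_ln less_le_trans zero_less_one mult_1_right)
    then have vt1: "v \<ge> t1" unfolding v_def using t11 by (simp add: field_simps)
    have "t / t1 < exp (real n + 1)" using n2 q1 by (metis exp_less_cancel_iff exp_ln less_le_trans zero_less_one mult_1_right)
    then have "v < exp 1 * t1" unfolding v_def using t11 by (simp add: field_simps exp_add)
    then have omv: "om v \<le> W" unfolding W_def using vt1 t11 by (intro omega_mono) auto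
    have vp: "v > 0" using vt1 t11 by simp
    have "om (exp 1 * l * v) \<ge> 0" using vp l by (intro omega_nonneg) simp
    then have "om (exp 1 * l * t) \<ge> D * l powr b * (om t - om v)"
      using step[OF vt1 l, of n] unfolding tv[symmetric] by simp
    moreover have "D * l powr b * (om t - om v) \<ge> D * l powr b * (om t / 2)"
      using omv omW D by (intro mult_left_mono) auto
    ultimately show ?thesis by simp
  qed
  define D' where "D' = min (D / 2) 1 * exp (- b)"
  have D'0: "D' > 0" unfolding D'_def using D by simp
  have "\<forall>t\<ge>t2. \<forall>l\<ge>1. om (l * t) \<ge> D' * l powr b * om t"
  proof (intro allI impI)
    fix t l :: real assume t: "t \<ge> t2" and l: "1 \<le> l"
    have tp: "t > 0" using t t11 unfolding t2_def by (smt (verit) exp_gt_zero mult_pos_pos)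
    have omt: "om t \<ge> 0" using omega_nonneg[OF tp] .
    show "om (l * t) \<ge> D' * l powr b * om t"
    proof (cases "l \<ge> exp 1")
      case True
      define l' where "l' = l / exp 1"
      have l'1: "l' \<ge> 1" unfolding l'_def using True by simp
      have ll: "exp 1 * l' = l" unfolding l'_def by simp
      have "om (l * t) \<ge> (D / 2) * l' powr b * om t" using main[OF t l'1] unfolding ll .
      moreover have "l' powr b = exp (- b) * l powr b" unfolding l'_def using l
        by (simp add: powr_divide exp_powr exp_minus field_simps)
      moreover have "D' * l powr b * om t \<le> (D / 2) * (exp (- b) * l powr b) * om t"
      proof -
        have "min (D / 2) 1 * (exp (- b) * l powr b) \<le> (D / 2) * (exp (- b) * l powr b)"
          by (intro mult_right_mono) auto
        then have "D' * l powr b \<le> (D / 2) * (exp (- b) * l powr b)" unfolding D'_def by (simp add: mult_ac)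
        then show ?thesis using omt by (intro mult_right_mono) auto
      qed
      ultimately show ?thesis by simp
    next
      case False
      have "l powr b \<le> exp 1 powr b" using False l b by (intro powr_mono2) auto
      then have "exp (- b) * l powr b \<le> 1" by (simp add: exp_powr exp_minus field_simps)
      then have "D' * l powr b \<le> 1" unfolding D'_def
        by (smt (verit) min.cobounded2 mult.assoc mult_le_one exp_gt_zero powr_ge_zero mult_nonneg_nonneg)
      then have "D' * l powr b * om t \<le> 1 * om t" using omt by (intro mult_right_mono) auto
      then have "D' * l powr b * om t \<le> om t" by simp
      also have "om t \<le> om (l * t)" using tp l by (intro omega_mono) (auto simp: mult_right_mono[of 1 l t, simplified])
      finally show ?thesis .
    qed
  qed
  then show ?thesis unfolding Bset_def using D'0 by blast
qed

end

context wseq begin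

lemma F2: assumes b: "b > 0" and B: "b \<in> Bset om" shows "b \<in> Bset nu"
proof -
  obtain D t0 where D: "D > 0" and h: "\<And>t l. t \<ge> t0 \<Longrightarrow> l \<ge> 1 \<Longrightarrow> om (l * t) \<ge> D * l powr b * om t"
    using B unfolding Bset_def by blast
  define t1 where "t1 = max t0 1"
  have t11: "t1 \<ge> 1" unfolding t1_def by simp
  define H where "H = max (exp 1) ((2 / D) powr (1 / b))"
  have He: "H \<ge> exp 1" unfolding H_def by simp
  have H1: "H \<ge> 1" using He one_le_exp_iff[of "1::real"] by linarith
  have Hp: "H > 0" using H1 by simp
  have lnH: "ln H \<ge> 1" using He Hp by (metis ln_exp ln_le_cancel_iff exp_gt_zero)
  have DH: "D * H powr b \<ge> 2"
  proof -
    have "2 / D = ((2 / D) powr (1 / b)) powr b" using b D by (simp add: powr_powr)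
    also have "\<dots> \<le> H powr b" unfolding H_def using b by (intro powr_mono2) auto
    finally show ?thesis using D by (simp add: field_simps)
  qed
  have ineq: "om v \<le> 2 * ln H * nu v" if v: "v \<ge> H * t1" for v
  proof -
    define u where "u = v / H"
    have u: "u \<ge> t1" unfolding u_def using v Hp by (simp add: field_simps)
    have up: "u > 0" using u t11 by simp
    have vu: "v = H * u" unfolding u_def using Hp by simp
    have omu: "om u \<ge> 0" using omega_nonneg[OF up] .
    have "om (H * u) \<ge> D * H powr b * om u" using h[of u H] u H1 unfolding t1_def by (simp add: mult.commute)
    moreover have "D * H powr b * om u \<ge> 2 * om u" using DH omu by (intro mult_right_mono) auto
    moreover have "om (H * u) \<le> nu (H * u) * ln H + om u" using omega_w3[OF H1 up] unfolding nu_eq .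
    ultimately have "om (H * u) \<le> 2 * (nu (H * u) * ln H)" by linarith
    then show ?thesis unfolding vu by (simp add: mult_ac)
  qed
  define D' where "D' = min (D / (2 * ln H)) 1 * exp (- b)"
  have D'0: "D' > 0" unfolding D'_def using D lnH by simp
  have "\<forall>t\<ge>H * t1. \<forall>l\<ge>1. nu (l * t) \<ge> D' * l powr b * nu t"
  proof (intro allI impI)
    fix t l :: real assume t: "H * t1 \<le> t" and l: "1 \<le> l"
    have "1 * t1 \<le> H * t1" using H1 t11 by (intro mult_right_mono) auto
    then have tt1: "t \<ge> t1" using t by simp
    have tp: "t > 0" using tt1 t11 by simp
    have nut: "nu t \<ge> 0" unfolding nu_eq by simp
    have lt: "t \<le> l * t" using l tp by (simp add: mult_right_mono[of 1 l t, simplified])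
    show "nu (l * t) \<ge> D' * l powr b * nu t"
    proof (cases "l \<ge> exp 1")
      case True
      define l' where "l' = l / exp 1"
      have l'1: "l' \<ge> 1" unfolding l'_def using True by simp
      have ll: "l' * (exp 1 * t) = l * t" unfolding l'_def by simp
      have et: "exp 1 * t \<ge> t0"
      proof -
        have "1 * t \<le> exp 1 * t" using tp by (intro mult_right_mono) auto
        moreover have "t0 \<le> t" using tt1 unfolding t1_def by simp
        ultimately show ?thesis by linarith
      qed
      have "om (l * t) \<ge> D * l' powr b * om (exp 1 * t)" using h[OF et l'1] unfolding ll .
      moreover have "om (exp 1 * t) \<ge> nu t" using nu_le_om[OF tp] .
      moreover have "D * l' powr b \<ge> 0" using D by simp
      ultimately have 1: "om (l * t) \<ge> D * l' powr b * nu t"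
        by (meson mult_left_mono order.trans)
      have "om (l * t) \<le> 2 * ln H * nu (l * t)" using t lt by (intro ineq) linarith
      with 1 have 2: "D * l' powr b * nu t \<le> 2 * ln H * nu (l * t)" by linarith
      have l'b: "l' powr b = exp (- b) * l powr b" unfolding l'_def using l
        by (simp add: powr_divide exp_powr exp_minus field_simps)
      have "D' * l powr b * nu t \<le> (D / (2 * ln H)) * exp (- b) * l powr b * nu t"
      proof -
        have "min (D / (2 * ln H)) 1 * (exp (- b) * l powr b * nu t) \<le> (D / (2 * ln H)) * (exp (- b) * l powr b * nu t)"
          using nut by (intro mult_right_mono) auto
        then show ?thesis unfolding D'_def by (simp add: mult_ac)
      qed
      also have "\<dots> = (D * l' powr b * nu t) / (2 * ln H)" unfolding l'b by (simp add: field_simps)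
      also have "\<dots> \<le> nu (l * t)" using 2 lnH by (simp add: divide_le_eq mult.commute)
      finally show ?thesis .
    next
      case False
      have "l powr b \<le> exp 1 powr b" using False l b by (intro powr_mono2) auto
      then have "exp (- b) * l powr b \<le> 1" by (simp add: exp_powr exp_minus field_simps)
      then have "min (D / (2 * ln H)) 1 * (exp (- b) * l powr b) \<le> 1 * 1"
        by (intro mult_mono) auto
      then have "D' * l powr b \<le> 1" unfolding D'_def by (simp add: mult_ac)
      then have "D' * l powr b * nu t \<le> 1 * nu t" using nut by (intro mult_right_mono) auto
      also have "\<dots> \<le> nu (l * t)" using nu_mono[OF lt] by simp
      finally show ?thesis .
    qed
  qed
  then show ?thesis unfolding Bset_def using D'0 by blast
qed

lemma G_incl: assumes mg: "moderate_growth M" and a: "a \<in> Aset om" shows "a \<in> Aset nu"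
proof -
  obtain H where He: "H \<ge> exp 1" and hH: "\<And>t. t > 0 \<Longrightarrow> 2 * om t \<le> om (H * t)"
    using omega_w6[OF mg] by blast
  have H1: "H \<ge> 1" using He one_le_exp_iff[of "1::real"] by linarith
  have Hp: "H > 0" using H1 by simp
  have lnH: "ln H \<ge> 1" using He Hp by (metis ln_exp ln_le_cancel_iff exp_gt_zero)
  have ineq: "om v \<le> 2 * ln H * nu v" if v: "v > 0" for v
  proof -
    define u where "u = v / H"
    have up: "u > 0" unfolding u_def using v Hp by simp
    have vu: "v = H * u" unfolding u_def using Hp by simp
    have "om (H * u) \<le> nu (H * u) * ln H + om u" using omega_w3[OF H1 up] unfolding nu_eq .
    moreover have "2 * om u \<le> om (H * u)" using hH[OF up] .
    ultimately show ?thesis unfolding vu by (simp add: mult_ac)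
  qed
  obtain C t0 where C: "C > 0" and h: "\<And>t l. t \<ge> t0 \<Longrightarrow> l \<ge> 1 \<Longrightarrow> om (l * t) \<le> C * l powr a * om t"
    using a unfolding Aset_def by blast
  define C' where "C' = C * exp a * (2 * ln H)"
  have C'0: "C' > 0" unfolding C'_def using C lnH by simp
  have "\<forall>t\<ge>max t0 1. \<forall>l\<ge>1. nu (l * t) \<le> C' * l powr a * nu t"
  proof (intro allI impI)
    fix t l :: real assume t: "max t0 1 \<le> t" and l: "1 \<le> l"
    have tp: "t > 0" using t by simp
    have ltp: "l * t > 0" using tp l by simp
    have "1 * 1 \<le> exp 1 * l" using l by (intro mult_mono) auto
    then have el: "exp 1 * l \<ge> 1" by simp
    have "nu (l * t) \<le> om (exp 1 * (l * t))" using nu_le_om[OF ltp] .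
    also have "\<dots> = om ((exp 1 * l) * t)" by (simp add: mult_ac)
    also have "\<dots> \<le> C * (exp 1 * l) powr a * om t" using h t el by simp
    also have "(exp 1 * l) powr a = exp a * l powr a" using l by (simp add: powr_mult exp_powr)
    also have "C * (exp a * l powr a) * om t \<le> C * (exp a * l powr a) * (2 * ln H * nu t)"
      using ineq[OF tp] C by (intro mult_left_mono) auto
    also have "\<dots> = C' * l powr a * nu t" unfolding C'_def by (simp add: mult_ac)
    finally show "nu (l * t) \<le> C' * l powr a * nu t" .
  qed
  then show ?thesis unfolding Aset_def using C'0 by blast
qed

end

context wseq begin

lemma s_eq: "step_fun (quot M) = s" by (rule ext) (simp add: s_def)

lemma Sup_pos_eq:
  fixes X Y :: "real set"
  assumes "0 \<in> Y" "\<And>b. b \<in> X \<Longrightarrow> b > 0 \<Longrightarrow> b \<in> Y"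
  shows "Sup (ereal ` X) \<le> Sup (ereal ` Y)"
proof (rule Sup_least)
  fix y assume "y \<in> ereal ` X"
  then obtain b where b: "b \<in> X" "y = ereal b" by auto
  show "y \<le> Sup (ereal ` Y)"
  proof (cases "b > 0")
    case True
    then show ?thesis using b assms(2) by (auto intro: Sup_upper)
  next
    case False
    then have "y \<le> ereal 0" using b by simp
    also have "\<dots> \<le> Sup (ereal ` Y)" using assms(1) by (auto intro: Sup_upper)
    finally show ?thesis .
  qed
qed

lemma main:
  shows "(gamma_seq M = beta_idx (step_fun (quot M))
       \<and> beta_idx (step_fun (quot M)) = inverse (alpha_idx (nu_c (quot M)))
       \<and> inverse (alpha_idx (nu_c (quot M))) \<le> inverse (alpha_idx (omega_w M))
       \<and> inverse (alpha_idx (omega_w M)) = gamma_fun (omega_w M))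
       \<and> (alpha_idx (step_fun (quot M)) = inverse (beta_idx (nu_c (quot M)))
       \<and> inverse (beta_idx (nu_c (quot M))) = inverse (beta_idx (omega_w M)))
       \<and> (moderate_growth M \<longrightarrow> gamma_seq M = gamma_fun (omega_w M))"
proof -
  have as: "alpha_idx s = Inf (ereal ` Aset s)" by (rule alpha_char[of 0]) (rule s_pos)
  have bs: "beta_idx s = Sup (ereal ` Bset s)" by (rule beta_char[of 0]) (rule s_pos)
  have an: "alpha_idx nu = Inf (ereal ` Aset nu)" by (rule alpha_char[of "m 0"]) (rule nu_pos)
  have bn: "beta_idx nu = Sup (ereal ` Bset nu)" by (rule beta_char[of "m 0"]) (rule nu_pos)
  have ao: "alpha_idx om = Inf (ereal ` Aset om)" by (rule alpha_char[of "2 * m 0"]) (rule om_pos)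
  have bo: "beta_idx om = Sup (ereal ` Bset om)" by (rule beta_char[of "2 * m 0"]) (rule om_pos)
  have s0: "0 \<in> Bset s" by (rule Bset_nonpos[of 0 s]) (auto intro: s_pos s_mono)
  have n0: "0 \<in> Bset nu" by (rule Bset_nonpos[of "m 0" nu]) (auto intro: nu_pos nu_mono)
  have o0: "0 \<in> Bset om" by (rule Bset_nonpos[of "2 * m 0" om]) (auto intro: om_pos om_mono2)
  have 1: "gamma_seq M = beta_idx s" unfolding A bs ..
  have 2: "beta_idx s = inverse (alpha_idx nu)" unfolding bs an
  proof (rule inv_lemma)
    show "Aset nu \<subseteq> {0<..}" by (rule nu_Aset_pos)
    show "0 \<in> Bset s" by (rule s0)
    fix b assume "b \<in> Bset s" "b > 0"
    then show "\<exists>a\<in>Aset nu. a \<le> 1 / b" using B1 by blast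
  next
    fix a g assume "a \<in> Aset nu" "0 < g" "g < 1 / a"
    then show "\<exists>b\<in>Bset s. g \<le> b" using B2 by (meson less_imp_le)
  qed
  have CC: "Aset nu \<subseteq> Aset om" using C_incl by blast
  have ao0: "Inf (ereal ` Aset om) \<ge> 0" using om_Aset_pos by (intro Inf_greatest) auto
  have 3: "inverse (alpha_idx nu) \<le> inverse (alpha_idx om)" unfolding an ao
    using CC ao0 by (intro ereal_inverse_antimono Inf_superset_mono image_mono) auto
  have 4: "inverse (alpha_idx om) = gamma_fun om" unfolding ao
    by (rule gamma_lemma[of "2 * m 0", symmetric]) (auto intro: om_pos om_mono2 om_unb)
  have 5: "alpha_idx s = inverse (beta_idx nu)" unfolding as bn
  proof (rule inv_lemma')
    show "Aset s \<subseteq> {0<..}" by (rule s_Aset_pos)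
    show "0 \<in> Bset nu" by (rule n0)
    fix b assume "b \<in> Bset nu" "b > 0"
    then show "\<exists>a\<in>Aset s. a \<le> 1 / b" using E2 by blast
  next
    fix a g assume "a \<in> Aset s" "0 < g" "g < 1 / a"
    then show "\<exists>b\<in>Bset nu. g \<le> b" using E1 by (meson less_imp_le)
  qed
  have 6: "beta_idx nu = beta_idx om" unfolding bn bo
  proof (rule antisym)
    show "Sup (ereal ` Bset nu) \<le> Sup (ereal ` Bset om)" using o0 F1 by (intro Sup_pos_eq) auto
    show "Sup (ereal ` Bset om) \<le> Sup (ereal ` Bset nu)" using n0 F2 by (intro Sup_pos_eq) auto
  qed
  have 7: "gamma_seq M = gamma_fun om" if mg: "moderate_growth M"
  proof -
    have "Aset om = Aset nu" using CC G_incl[OF mg] by blast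
    then show ?thesis using 1 2 4 unfolding an ao by simp
  qed
  show ?thesis unfolding s_eq using 1 2 3 4 5 6 7 by simp
qed

end

theorem corollary4p6:
  fixes M :: "nat \<Rightarrow> real"
  assumes "weight_seq M"
  shows "(gamma_seq M = beta_idx (step_fun (quot M))
       \<and> beta_idx (step_fun (quot M)) = inverse (alpha_idx (nu_c (quot M)))
       \<and> inverse (alpha_idx (nu_c (quot M))) \<le> inverse (alpha_idx (omega_w M))
       \<and> inverse (alpha_idx (omega_w M)) = gamma_fun (omega_w M))
       \<and> (alpha_idx (step_fun (quot M)) = inverse (beta_idx (nu_c (quot M)))
       \<and> inverse (beta_idx (nu_c (quot M))) = inverse (beta_idx (omega_w M)))
       \<and> (moderate_growth M \<longrightarrow> gamma_seq M = gamma_fun (omega_w M))"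
proof -
  interpret wseq M by (rule wseq.intro) (rule assms)
  show ?thesis by (rule main)
qed

end
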